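(* Let $(M,\mathcal F,\mathcal J)$ be a generalized almost para-Hermitian manifold with associated triple $(\gamma,\psi,F)$ and let $\iota:N\hookrightarrow M$ be a submanifold. Then $N$ is a regular invariant submanifold if and only if the subspaces $\overleftarrow{\iota}^*\mathbf H_+,\overleftarrow{\iota}^*\mathbf H_-,\overleftarrow{\iota}^*\overline{\mathbf H}_+,\overleftarrow{\iota}^*\overline{\mathbf H}_-$ give a decomposition $$\mathbf T^cN=\overleftarrow{\iota}^*\mathbf H_+\oplus\overleftarrow{\iota}^*\mathbf H_-\oplus\overleftarrow{\iota}^*\overline{\mathbf H}_+\oplus\overleftarrow{\iota}^*\overline{\mathbf H}_-$$ which defines a generalized almost para-Hermitian structure on $N$ (i.e. $\overleftarrow{\iota}^*\mathbf H_\pm\oplus\overleftarrow{\iota}^*\overline{\mathbf H}_\pm$ are the $\pm1$-eigenbundles of a generalized almost paracomplex structure $\mathcal F_N$ and $\overleftarrow{\iota}^*\mathbf H_+\oplus\overleftarrow{\iota}^*\overline{\mathbf H}_-$ is the $i$-eigenbundle of a generalized almost complex structure $\mathcal J_N$, with $(\mathcal F_N,\mathcal J_N)$ generalized almost para-Hermitian). In this case the structure so defined is the one whose associated triple is $(\iota^*\gamma,\iota^*\psi,F|_{T^cN})$.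
   Context: $\mathbf TM=TM\oplus T^*M$ with pairing $g((X,\alpha),(Y,\beta))=\frac12(\alpha(Y)+\beta(X))$; superscript $c$ = complexification, bar = conjugation. A generalized almost para-Hermitian structure is a commuting pair $(\mathcal F,\mathcal J)$ with $\mathcal F^2=\mathrm{Id}$, $\mathcal J^2=-\mathrm{Id}$, both $g$-skew, and non-degenerate symmetric bivector $\gamma(\alpha,\beta)=-2g(\mathcal F(0,\alpha),\mathcal J(0,\beta))$. $\mathbf F_\pm$ are the $\pm1$-eigenbundles of $\mathcal F$, $\mathcal H=\mathcal F\mathcal J$, $\mathbf H$ its $i$-eigenbundle and $\mathbf H_\pm=\mathbf F_\pm\cap\mathbf H$. Associated triple: $\gamma$ also denotes the inverse pseudo-Riemannian metric on $TM$; with $\mathcal H(X,0)=(QX,\ast)$, $\psi(X,Y)=-\gamma(QX,Y)$; $\mathbf H=\tau(T^cM)$, $\tau(X)=(X,\psi(X,\cdot)+i\gamma(X,\cdot))$; $FX=\mathrm{pr}_{T^cM}\mathcal F(\tau X)$ (so $F^2=\mathrm{Id}$, $\gamma(FX,Y)=-\gamma(X,FY)$); every such triple determines a unique structure. A submanifold $N$ is regular invariant if $\iota^*\gamma$ is non-degenerate and $T^cN$ is $F$-invariant. Pullback: for $U\subseteq\mathbf T^c_xM$, $\overleftarrow{\iota}^*U=\{(X,\iota^*\eta):X\in T^c_xN,\ (\iota_*X,\eta)\in U\}\subseteq\mathbf T^c_xN$. *)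

theory Defs
  imports "HOL-Analysis.Analysis"
begin

text \<open>Pointwise (fibrewise) linear-algebra model.  The tangent space T_xM is
  real^'m, covectors are identified with real^'m via the standard pairing
  (alpha(X) = sum of alpha_i X_i), so the generalized tangent space is
  real^'m \<times> real^'m.\<close>

type_synonym ('m) gtan = "(real^('m::finite)) \<times> (real^'m)"
type_synonym ('m) cgtan = "(complex^('m::finite)) \<times> (complex^'m)"

definition dotc :: "complex^'m::finite \<Rightarrow> complex^'m \<Rightarrow> complex" where
  "dotc a X = (\<Sum>i\<in>UNIV. a$i * X$i)"

definition gR :: "'m::finite gtan \<Rightarrow> 'm gtan \<Rightarrow> real" where
  "gR u v = ((snd u) \<bullet> (fst v) + (snd v) \<bullet> (fst u)) / 2"

definition gC :: "'m::finite cgtan \<Rightarrow> 'm cgtan \<Rightarrow> complex" where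
  "gC u v = (dotc (snd u) (fst v) + dotc (snd v) (fst u)) / 2"

definition reV :: "complex^'m::finite \<Rightarrow> real^'m" where "reV z = (\<chi> i. Re (z$i))"
definition imV :: "complex^'m::finite \<Rightarrow> real^'m" where "imV z = (\<chi> i. Im (z$i))"
definition cmb :: "real^'m::finite \<Rightarrow> real^'m \<Rightarrow> complex^'m" where
  "cmb x y = (\<chi> i. Complex (x$i) (y$i))"

definition cx :: "(real^'a::finite \<Rightarrow> real^'b::finite) \<Rightarrow> complex^'a \<Rightarrow> complex^'b" where
  "cx f z = cmb (f (reV z)) (f (imV z))"

definition cxT :: "('a::finite gtan \<Rightarrow> 'b::finite gtan) \<Rightarrow> 'a cgtan \<Rightarrow> 'b cgtan" where
  "cxT f u = (let r = f (reV (fst u), reV (snd u)); s = f (imV (fst u), imV (snd u))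
              in (cmb (fst r) (fst s), cmb (snd r) (snd s)))"

definition cxb :: "(real^'m::finite \<Rightarrow> real^'m \<Rightarrow> real) \<Rightarrow> complex^'m \<Rightarrow> complex^'m \<Rightarrow> complex" where
  "cxb b z w = Complex (b (reV z) (reV w) - b (imV z) (imV w)) (b (reV z) (imV w) + b (imV z) (reV w))"

definition scT :: "complex \<Rightarrow> 'm::finite cgtan \<Rightarrow> 'm cgtan" where
  "scT c u = (c *s fst u, c *s snd u)"

definition cnjT :: "'m::finite cgtan \<Rightarrow> 'm cgtan" where
  "cnjT u = ((\<chi> i. cnj (fst u $ i)), (\<chi> i. cnj (snd u $ i)))"

definition bar :: "'m::finite cgtan set \<Rightarrow> 'm cgtan set" where
  "bar U = cnjT ` U"

definition setsum2 :: "'m::finite cgtan set \<Rightarrow> 'm cgtan set \<Rightarrow> 'm cgtan set" where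
  "setsum2 U V = {a + b | a b. a \<in> U \<and> b \<in> V}"

definition direct_sum4 :: "'m::finite cgtan set \<Rightarrow> 'm cgtan set \<Rightarrow> 'm cgtan set \<Rightarrow> 'm cgtan set \<Rightarrow> bool" where
  "direct_sum4 U1 U2 U3 U4 \<longleftrightarrow>
     (\<forall>u. \<exists>!(a,b,c,d). a \<in> U1 \<and> b \<in> U2 \<and> c \<in> U3 \<and> d \<in> U4 \<and> u = a + b + c + d)"

definition bivec :: "('m::finite gtan \<Rightarrow> 'm gtan) \<Rightarrow> ('m gtan \<Rightarrow> 'm gtan) \<Rightarrow> real^'m \<Rightarrow> real^'m \<Rightarrow> real" where
  "bivec F J \<alpha> \<beta> = - 2 * gR (F (0, \<alpha>)) (J (0, \<beta>))"

definition gaph :: "('m::finite gtan \<Rightarrow> 'm gtan) \<Rightarrow> ('m gtan \<Rightarrow> 'm gtan) \<Rightarrow> bool" where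
  "gaph F J \<longleftrightarrow> linear F \<and> linear J \<and>
     (\<forall>u. F (F u) = u) \<and> (\<forall>u. J (J u) = - u) \<and>
     (\<forall>u v. gR (F u) v = - gR u (F v)) \<and> (\<forall>u v. gR (J u) v = - gR u (J v)) \<and>
     (\<forall>u. F (J u) = J (F u)) \<and>
     (\<forall>\<alpha> \<beta>. bivec F J \<alpha> \<beta> = bivec F J \<beta> \<alpha>) \<and>
     (\<forall>\<alpha>. (\<forall>\<beta>. bivec F J \<alpha> \<beta> = 0) \<longrightarrow> \<alpha> = 0)"

definition Fplus :: "('m::finite gtan \<Rightarrow> 'm gtan) \<Rightarrow> 'm cgtan set" where
  "Fplus F = {u. cxT F u = u}"
definition Fminus :: "('m::finite gtan \<Rightarrow> 'm gtan) \<Rightarrow> 'm cgtan set" where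
  "Fminus F = {u. cxT F u = - u}"
definition Jeig :: "('m::finite gtan \<Rightarrow> 'm gtan) \<Rightarrow> 'm cgtan set" where
  "Jeig J = {u. cxT J u = scT \<i> u}"
definition Hbun :: "('m::finite gtan \<Rightarrow> 'm gtan) \<Rightarrow> ('m gtan \<Rightarrow> 'm gtan) \<Rightarrow> 'm cgtan set" where
  "Hbun F J = {u. cxT (F \<circ> J) u = scT \<i> u}"
definition Hplus where "Hplus F J = Fplus F \<inter> Hbun F J"
definition Hminus where "Hminus F J = Fminus F \<inter> Hbun F J"

definition sharp :: "('m::finite gtan \<Rightarrow> 'm gtan) \<Rightarrow> ('m gtan \<Rightarrow> 'm gtan) \<Rightarrow> real^'m \<Rightarrow> real^'m" where
  "sharp F J \<alpha> = (\<chi> k. bivec F J \<alpha> (axis k 1))"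

definition metric :: "('m::finite gtan \<Rightarrow> 'm gtan) \<Rightarrow> ('m gtan \<Rightarrow> 'm gtan) \<Rightarrow> real^'m \<Rightarrow> real^'m \<Rightarrow> real" where
  "metric F J X Y = bivec F J (THE \<alpha>. sharp F J \<alpha> = X) (THE \<beta>. sharp F J \<beta> = Y)"

definition Qop :: "('m::finite gtan \<Rightarrow> 'm gtan) \<Rightarrow> ('m gtan \<Rightarrow> 'm gtan) \<Rightarrow> real^'m \<Rightarrow> real^'m" where
  "Qop F J X = fst (F (J (X, 0)))"

definition psi :: "('m::finite gtan \<Rightarrow> 'm gtan) \<Rightarrow> ('m gtan \<Rightarrow> 'm gtan) \<Rightarrow> real^'m \<Rightarrow> real^'m \<Rightarrow> real" where
  "psi F J X Y = - metric F J (Qop F J X) Y"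

definition tau :: "('m::finite gtan \<Rightarrow> 'm gtan) \<Rightarrow> ('m gtan \<Rightarrow> 'm gtan) \<Rightarrow> complex^'m \<Rightarrow> 'm cgtan" where
  "tau F J X = (X, (\<chi> j. cxb (psi F J) X (axis j 1) + \<i> * cxb (metric F J) X (axis j 1)))"

definition Fop :: "('m::finite gtan \<Rightarrow> 'm gtan) \<Rightarrow> ('m gtan \<Rightarrow> 'm gtan) \<Rightarrow> complex^'m \<Rightarrow> complex^'m" where
  "Fop F J X = fst (cxT F (tau F J X))"

definition pb_cov :: "(real^'n::finite \<Rightarrow> real^'m::finite) \<Rightarrow> complex^'m \<Rightarrow> complex^'n" where
  "pb_cov \<iota> \<eta> = (\<chi> j. dotc \<eta> (cx \<iota> (axis j 1)))"

definition pbT :: "(real^'n::finite \<Rightarrow> real^'m::finite) \<Rightarrow> 'm cgtan set \<Rightarrow> 'n cgtan set" where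
  "pbT \<iota> U = {(X, pb_cov \<iota> \<eta>) | X \<eta>. (cx \<iota> X, \<eta>) \<in> U}"

definition pb_form :: "(real^'n::finite \<Rightarrow> real^'m::finite) \<Rightarrow> (real^'m \<Rightarrow> real^'m \<Rightarrow> real) \<Rightarrow> real^'n \<Rightarrow> real^'n \<Rightarrow> real" where
  "pb_form \<iota> b X Y = b (\<iota> X) (\<iota> Y)"

text \<open>Regular invariant: iota^* gamma non-degenerate and T^cN is F-invariant.\<close>
definition regular_invariant ::
  "('m::finite gtan \<Rightarrow> 'm gtan) \<Rightarrow> ('m gtan \<Rightarrow> 'm gtan) \<Rightarrow> (real^'n::finite \<Rightarrow> real^'m) \<Rightarrow> bool" where
  "regular_invariant F J \<iota> \<longleftrightarrow>
     (\<forall>X. (\<forall>Y. pb_form \<iota> (metric F J) X Y = 0) \<longrightarrow> X = 0) \<and>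
     (\<forall>X. \<exists>Y. Fop F J (cx \<iota> X) = cx \<iota> Y)"

end

theory Submission
  imports Defs
begin


definition rp :: "'m::finite cgtan \<Rightarrow> 'm gtan" where
  "rp u = (reV (fst u), reV (snd u))"
definition ip :: "'m::finite cgtan \<Rightarrow> 'm gtan" where
  "ip u = (imV (fst u), imV (snd u))"
definition mk :: "'m::finite gtan \<Rightarrow> 'm gtan \<Rightarrow> 'm cgtan" where
  "mk r s = (cmb (fst r) (fst s), cmb (snd r) (snd s))"

lemma reV_cmb[simp]: "reV (cmb x y) = x" by (simp add: reV_def cmb_def vec_eq_iff)
lemma imV_cmb[simp]: "imV (cmb x y) = y" by (simp add: imV_def cmb_def vec_eq_iff)
lemma cmb_reV_imV[simp]: "cmb (reV z) (imV z) = z"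
  by (simp add: reV_def imV_def cmb_def vec_eq_iff complex_eq_iff)
lemma cmb_eq_iff: "cmb x y = cmb x' y' \<longleftrightarrow> x = x' \<and> y = y'"
  by (metis reV_cmb imV_cmb)
lemma reV_add[simp]: "reV (a + b) = reV a + reV b" by (simp add: reV_def vec_eq_iff)
lemma imV_add[simp]: "imV (a + b) = imV a + imV b" by (simp add: imV_def vec_eq_iff)
lemma reV_diff[simp]: "reV (a - b) = reV a - reV b" by (simp add: reV_def vec_eq_iff)
lemma imV_diff[simp]: "imV (a - b) = imV a - imV b" by (simp add: imV_def vec_eq_iff)
lemma reV_neg[simp]: "reV (- a) = - reV a" by (simp add: reV_def vec_eq_iff)
lemma imV_neg[simp]: "imV (- a) = - imV a" by (simp add: imV_def vec_eq_iff)
lemma reV_zero[simp]: "reV 0 = 0" by (simp add: reV_def vec_eq_iff)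
lemma imV_zero[simp]: "imV 0 = 0" by (simp add: imV_def vec_eq_iff)

lemma rp_mk[simp]: "rp (mk r s) = r" by (simp add: rp_def mk_def)
lemma ip_mk[simp]: "ip (mk r s) = s" by (simp add: ip_def mk_def)
lemma mk_rp_ip[simp]: "mk (rp u) (ip u) = u" by (simp add: rp_def ip_def mk_def)
lemma cgtan_eq_iff: "u = v \<longleftrightarrow> rp u = rp v \<and> ip u = ip v"
  by (metis mk_rp_ip)
lemma mk_eq_iff[simp]: "mk r s = mk r' s' \<longleftrightarrow> r = r' \<and> s = s'"
  by (metis rp_mk ip_mk)
lemma rp_add[simp]: "rp (u + v) = rp u + rp v" by (simp add: rp_def)
lemma ip_add[simp]: "ip (u + v) = ip u + ip v" by (simp add: ip_def)
lemma rp_diff[simp]: "rp (u - v) = rp u - rp v" by (simp add: rp_def)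
lemma ip_diff[simp]: "ip (u - v) = ip u - ip v" by (simp add: ip_def)
lemma rp_neg[simp]: "rp (- u) = - rp u" by (simp add: rp_def)
lemma ip_neg[simp]: "ip (- u) = - ip u" by (simp add: ip_def)
lemma rp_zero[simp]: "rp 0 = 0" by (simp add: rp_def zero_prod_def)
lemma ip_zero[simp]: "ip 0 = 0" by (simp add: ip_def zero_prod_def)

lemma cxT_mk: "cxT f u = mk (f (rp u)) (f (ip u))"
  by (simp add: cxT_def mk_def rp_def ip_def Let_def)
lemma rp_cxT[simp]: "rp (cxT f u) = f (rp u)" by (simp add: cxT_mk)
lemma ip_cxT[simp]: "ip (cxT f u) = f (ip u)" by (simp add: cxT_mk)
lemma cxT_comp: "cxT f (cxT h u) = cxT (f \<circ> h) u" by (simp add: cxT_mk)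

lemma rp_scT_i[simp]: "rp (scT \<i> u) = - ip u"
  by (simp add: rp_def ip_def scT_def reV_def imV_def vec_eq_iff)
lemma ip_scT_i[simp]: "ip (scT \<i> u) = rp u"
  by (simp add: rp_def ip_def scT_def reV_def imV_def vec_eq_iff)
lemma rp_cnjT[simp]: "rp (cnjT u) = rp u"
  by (simp add: rp_def cnjT_def reV_def vec_eq_iff)
lemma ip_cnjT[simp]: "ip (cnjT u) = - ip u"
  by (simp add: ip_def cnjT_def imV_def vec_eq_iff)
lemma cnjT_cnjT[simp]: "cnjT (cnjT u) = u" by (simp add: cgtan_eq_iff)

lemma Fplus_iff: "u \<in> Fplus F \<longleftrightarrow> F (rp u) = rp u \<and> F (ip u) = ip u"
  by (simp add: Fplus_def cgtan_eq_iff)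
lemma Fminus_iff: "u \<in> Fminus F \<longleftrightarrow> F (rp u) = - rp u \<and> F (ip u) = - ip u"
  by (simp add: Fminus_def cgtan_eq_iff)
lemma Jeig_iff: "u \<in> Jeig J \<longleftrightarrow> J (rp u) = - ip u \<and> J (ip u) = rp u"
  by (simp add: Jeig_def cgtan_eq_iff)
lemma Hbun_iff: "u \<in> Hbun F J \<longleftrightarrow> F (J (rp u)) = - ip u \<and> F (J (ip u)) = rp u"
  by (simp add: Hbun_def cgtan_eq_iff)
lemma bar_iff: "u \<in> bar U \<longleftrightarrow> cnjT u \<in> U"
  unfolding bar_def by (metis cnjT_cnjT image_iff)


definition gfl :: "('m::finite gtan \<Rightarrow> 'm gtan) \<Rightarrow> ('m gtan \<Rightarrow> 'm gtan) \<Rightarrow> real^'m \<Rightarrow> real^'m" where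
  "gfl F J Y = (\<chi> j. metric F J Y (axis j 1))"
definition pfl :: "('m::finite gtan \<Rightarrow> 'm gtan) \<Rightarrow> ('m gtan \<Rightarrow> 'm gtan) \<Rightarrow> real^'m \<Rightarrow> real^'m" where
  "pfl F J Y = (\<chi> j. psi F J Y (axis j 1))"

lemma gR_simp: "gR (a, b) (c, d) = (b \<bullet> c + d \<bullet> a) / 2" by (simp add: gR_def)

locale gp =
  fixes F J :: "'m::finite gtan \<Rightarrow> 'm gtan"
  assumes G: "gaph F J"
begin

lemma linF: "linear F" and linJ: "linear J" and FF[simp]: "F (F u) = u" and JJ[simp]: "J (J u) = - u"
  and skF: "gR (F u) v = - gR u (F v)" and skJ: "gR (J u) v = - gR u (J v)"
  and comm: "F (J u) = J (F u)"
  and bsym: "bivec F J a b = bivec F J b a"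
  and bnd: "(\<And>b. bivec F J a b = 0) \<Longrightarrow> a = 0"
  using G unfolding gaph_def by blast+

lemma F_add: "F (u + v) = F u + F v" using linF by (simp add: linear_add)
lemma J_add: "J (u + v) = J u + J v" using linJ by (simp add: linear_add)
lemma F_diff: "F (u - v) = F u - F v" using linF by (simp add: linear_diff)
lemma J_diff: "J (u - v) = J u - J v" using linJ by (simp add: linear_diff)
lemma F_neg: "F (- u) = - F u" using linF by (simp add: linear_neg)
lemma J_neg: "J (- u) = - J u" using linJ by (simp add: linear_neg)
lemma F_0: "F 0 = 0" using linF by (simp add: linear_0)
lemma J_0: "J 0 = 0" using linJ by (simp add: linear_0)
lemma F_scale: "F (c *\<^sub>R u) = c *\<^sub>R F u" using linF by (simp add: linear_scale)
lemma J_scale: "J (c *\<^sub>R u) = c *\<^sub>R J u" using linJ by (simp add: linear_scale)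

lemmas lin_simps = F_add J_add F_diff J_diff F_neg J_neg F_0 J_0 F_scale J_scale

lemma HH: "F (J (F (J u))) = - u"
  by (metis FF JJ comm)
lemma HF: "F (J (F u)) = F (F (J u))"
  by (metis comm)

lemma bivec_fst: "bivec F J b a = b \<bullet> fst (F (J (0, a)))"
proof -
  have "bivec F J b a = -2 * gR (F (0,b)) (J (0,a))" by (simp add: bivec_def)
  also have "\<dots> = 2 * gR (0,b) (F (J (0,a)))" using skF by simp
  also have "\<dots> = b \<bullet> fst (F (J (0, a)))"
    by (cases "F (J (0,a))") (simp add: gR_simp)
  finally show ?thesis .
qed

definition sh where "sh a = fst (F (J (0, a)))"

lemma sharp_eq: "sharp F J a = sh a"
proof -
  have "bivec F J a (axis k 1) = sh a $ k" for k
    using bsym[of a "axis k 1"] by (simp add: bivec_fst sh_def inner_axis')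
  then show ?thesis unfolding sharp_def by (simp add: vec_eq_iff)
qed

lemma sh_add: "sh (a + b) = sh a + sh b"
proof -
  have "sh (a+b) = fst (F (J ((0,a) + (0,b))))" unfolding sh_def by simp
  also have "\<dots> = sh a + sh b" by (simp only: J_add F_add fst_add sh_def)
  finally show ?thesis .
qed
lemma sh_scale: "sh (c *\<^sub>R a) = c *\<^sub>R sh a"
proof -
  have "sh (c *\<^sub>R a) = fst (F (J (c *\<^sub>R (0,a))))" unfolding sh_def by simp
  also have "\<dots> = c *\<^sub>R sh a" by (simp only: J_scale F_scale fst_scaleR sh_def)
  finally show ?thesis .
qed
lemma lin_sh: "linear sh"
  by (rule linearI) (simp_all add: sh_add sh_scale)

lemma sh_inj: "inj sh"
proof -
  have "a = 0" if "sh a = 0" for a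
  proof (rule bnd)
    fix b have "bivec F J a b = bivec F J b a" by (rule bsym)
    also have "\<dots> = 0" using that by (simp add: bivec_fst sh_def)
    finally show "bivec F J a b = 0" .
  qed
  then show ?thesis using lin_sh by (simp add: linear_injective_0)
qed

lemma sh_surj: "surj sh"
  using lin_sh sh_inj linear_injective_imp_surjective by blast

definition fl where "fl Y = inv sh Y"
lemma sh_fl[simp]: "sh (fl Y) = Y" unfolding fl_def using sh_surj by (simp add: surj_f_inv_f)
lemma fl_sh[simp]: "fl (sh a) = a" unfolding fl_def using sh_inj by simp

lemma the_sharp: "(THE a. sharp F J a = Y) = fl Y"
  unfolding sharp_eq by (rule the_equality) (auto)

lemma fl_add: "fl (a + b) = fl a + fl b"
  by (metis fl_sh sh_add sh_fl)
lemma fl_scale: "fl (c *\<^sub>R a) = c *\<^sub>R fl a"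
  by (metis fl_sh sh_scale sh_fl)
lemma lin_fl: "linear fl" by (rule linearI) (simp_all add: fl_add fl_scale)

lemma metric_eq: "metric F J Y Z = fl Y \<bullet> Z"
  unfolding metric_def the_sharp bivec_fst by (simp add: sh_def[symmetric])

lemma gfl_eq: "gfl F J Y = fl Y"
  by (simp add: gfl_def metric_eq vec_eq_iff inner_axis)

lemma lin_gfl: "linear (gfl F J)" using lin_fl by (simp add: gfl_eq[abs_def])

lemma Qop_add: "Qop F J (a + b) = Qop F J a + Qop F J b"
proof -
  have "Qop F J (a+b) = fst (F (J ((a,0) + (b,0))))" unfolding Qop_def by simp
  also have "\<dots> = Qop F J a + Qop F J b" by (simp only: J_add F_add fst_add Qop_def)
  finally show ?thesis .
qed
lemma Qop_scale: "Qop F J (c *\<^sub>R a) = c *\<^sub>R Qop F J a"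
proof -
  have "Qop F J (c *\<^sub>R a) = fst (F (J (c *\<^sub>R (a,0))))" unfolding Qop_def by simp
  also have "\<dots> = c *\<^sub>R Qop F J a" by (simp only: J_scale F_scale fst_scaleR Qop_def)
  finally show ?thesis .
qed

lemma psi_eq: "psi F J Y Z = - (fl (Qop F J Y) \<bullet> Z)"
  by (simp add: psi_def metric_eq)

lemma pfl_eq: "pfl F J Y = - fl (Qop F J Y)"
  by (simp add: pfl_def psi_eq vec_eq_iff inner_axis)

lemma lin_pfl: "linear (pfl F J)"
  by (rule linearI) (simp_all add: pfl_eq Qop_add Qop_scale fl_add fl_scale)

lemma metric_eq2: "metric F J Y Z = gfl F J Y \<bullet> Z" by (simp add: metric_eq gfl_eq)
lemma psi_eq2: "psi F J Y Z = pfl F J Y \<bullet> Z" by (simp add: psi_eq pfl_eq)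

lemma gfl_add: "gfl F J (a + b) = gfl F J a + gfl F J b" by (simp add: gfl_eq fl_add)
lemma gfl_diff: "gfl F J (a - b) = gfl F J a - gfl F J b" using lin_gfl by (simp add: linear_diff)
lemma gfl_neg: "gfl F J (- a) = - gfl F J a" using lin_gfl by (simp add: linear_neg)
lemma gfl_0: "gfl F J 0 = 0" using lin_gfl by (simp add: linear_0)
lemma gfl_scale: "gfl F J (c *\<^sub>R a) = c *\<^sub>R gfl F J a" using lin_gfl by (simp add: linear_scale)
lemma pfl_add: "pfl F J (a + b) = pfl F J a + pfl F J b" using lin_pfl by (simp add: linear_add)
lemma pfl_diff: "pfl F J (a - b) = pfl F J a - pfl F J b" using lin_pfl by (simp add: linear_diff)
lemma pfl_neg: "pfl F J (- a) = - pfl F J a" using lin_pfl by (simp add: linear_neg)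
lemma pfl_0: "pfl F J 0 = 0" using lin_pfl by (simp add: linear_0)
lemma pfl_scale: "pfl F J (c *\<^sub>R a) = c *\<^sub>R pfl F J a" using lin_pfl by (simp add: linear_scale)
lemmas fl_simps = gfl_add gfl_diff gfl_neg gfl_0 gfl_scale pfl_add pfl_diff pfl_neg pfl_0 pfl_scale

lemma sh_gfl[simp]: "sh (gfl F J Z) = Z" by (simp add: gfl_eq)
lemma gfl_sh[simp]: "gfl F J (sh a) = a" by (simp add: gfl_eq)

lemma H_split: "F (J (a, b)) = F (J (a, 0)) + F (J (0, b))"
proof -
  have "F (J (a, b)) = F (J ((a,0) + (0,b)))" by simp
  then show ?thesis by (simp only: J_add F_add)
qed

lemma I1: "F (J (0, gfl F J Z)) = (Z, pfl F J Z)"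
proof -
  define a where "a = gfl F J Z"
  define s where "s = snd (F (J (0, a)))"
  have f: "fst (F (J (0, a))) = Z" using sh_def a_def by (metis sh_gfl)
  have e: "F (J (0, a)) = (Z, s)" using f s_def by (metis prod.collapse)
  have "F (J (Z, s)) = - (0, a)" using HH[of "(0,a)"] e by simp
  then have "F (J (Z, 0)) + F (J (0, s)) = - (0, a)" by (metis H_split)
  then have "Qop F J Z + sh s = 0" unfolding Qop_def sh_def
    by (metis add.inverse_neutral fst_add fst_uminus fst_conv)
  then have "Qop F J Z = - sh s" by (simp add: eq_neg_iff_add_eq_0)
  moreover have "fl (- sh s) = - s" by (metis fl_sh sh_scale scaleR_minus1_left)
  ultimately have "pfl F J Z = s" by (simp add: pfl_eq)
  then show ?thesis using e a_def by simp
qed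

lemma I2: "F (J (Z, pfl F J Z)) = - (0, gfl F J Z)"
  using HH[of "(0, gfl F J Z)"] by (simp add: I1)

lemma graph_real:
  assumes "F (J r) = - s" "F (J s) = r"
  shows "snd r = pfl F J (fst r) - gfl F J (fst s) \<and> snd s = pfl F J (fst s) + gfl F J (fst r)"
proof -
  define A where "A = fst r"
  define B where "B = fst s"
  define r' where "r' = (A, pfl F J A - gfl F J B)"
  define s' where "s' = (B, pfl F J B + gfl F J A)"
  have r'e: "r' = (A, pfl F J A) - (0, gfl F J B)" by (simp add: r'_def)
  have s'e: "s' = (B, pfl F J B) + (0, gfl F J A)" by (simp add: s'_def)
  have h1: "F (J r') = - s'" unfolding r'e s'e by (simp only: F_diff J_diff F_add J_add I1 I2) simp
  have h2: "F (J s') = r'" unfolding r'e s'e by (simp only: F_diff J_diff F_add J_add I1 I2) simp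
  define d1 where "d1 = r - r'"
  define d2 where "d2 = s - s'"
  have hd1: "F (J d1) = - d2" by (simp add: d1_def d2_def F_diff J_diff assms h1)
  have hd2: "F (J d2) = d1" by (simp add: d1_def d2_def F_diff J_diff assms h2)
  have fd1: "fst d1 = 0" by (simp add: d1_def r'_def A_def)
  have fd2: "fst d2 = 0" by (simp add: d2_def s'_def B_def)
  have d1e: "d1 = (0, snd d1)" using fd1 by (metis prod.collapse)
  have d2e: "d2 = (0, snd d2)" using fd2 by (metis prod.collapse)
  have "sh (snd d1) = 0" using hd1 fd2 d1e unfolding sh_def by (metis fst_uminus neg_0_equal_iff_equal)
  then have "snd d1 = 0" using sh_inj lin_sh by (metis fl_sh linear_0)
  moreover have "sh (snd d2) = 0" using hd2 fd1 d2e unfolding sh_def by metis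
  then have "snd d2 = 0" using sh_inj lin_sh by (metis fl_sh linear_0)
  ultimately show ?thesis
    by (simp add: d1_def d2_def r'_def s'_def A_def B_def)
qed

lemma reV_axis: "reV (axis j (1::complex)) = axis j 1"
  by (simp add: reV_def axis_def vec_eq_iff)
lemma imV_axis: "imV (axis j (1::complex)) = 0"
  by (simp add: imV_def axis_def vec_eq_iff)

lemma tau_mk: "tau F J Y = mk (reV Y, pfl F J (reV Y) - gfl F J (imV Y)) (imV Y, pfl F J (imV Y) + gfl F J (reV Y))"
proof -
  have m0: "metric F J x 0 = 0" for x by (simp add: metric_eq)
  have p0: "psi F J x 0 = 0" for x by (simp add: psi_eq)
  have "snd (tau F J Y) $ j = Complex (psi F J (reV Y) (axis j 1) - metric F J (imV Y) (axis j 1))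
      (psi F J (imV Y) (axis j 1) + metric F J (reV Y) (axis j 1))" for j
    by (simp add: tau_def cxb_def reV_axis imV_axis m0 p0 complex_eq_iff)
  then show ?thesis
    by (simp add: mk_def tau_def vec_eq_iff cmb_def pfl_def gfl_def reV_def imV_def)
qed

lemma rp_tau: "rp (tau F J Y) = (reV Y, pfl F J (reV Y) - gfl F J (imV Y))"
  by (simp add: tau_mk)
lemma ip_tau: "ip (tau F J Y) = (imV Y, pfl F J (imV Y) + gfl F J (reV Y))"
  by (simp add: tau_mk)

lemma Fop_eq: "Fop F J Y = cmb (fst (F (rp (tau F J Y)))) (fst (F (ip (tau F J Y))))"
  by (simp add: Fop_def cxT_mk mk_def)

lemma graph_cx: assumes "u \<in> Hbun F J" shows "u = tau F J (fst u)"
proof -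
  from assms have a: "F (J (rp u)) = - ip u" "F (J (ip u)) = rp u" by (simp_all add: Hbun_iff)
  from graph_real[OF a] have g: "snd (rp u) = pfl F J (fst (rp u)) - gfl F J (fst (ip u))"
    "snd (ip u) = pfl F J (fst (ip u)) + gfl F J (fst (rp u))" by auto
  have "rp u = rp (tau F J (fst u))" "ip u = ip (tau F J (fst u))"
    using g by (simp_all add: rp_tau ip_tau prod_eq_iff) (simp_all add: rp_def ip_def)
  then show ?thesis by (simp add: cgtan_eq_iff)
qed

end


lemma half_half[simp]: "(1/2) *\<^sub>R x + (1/2) *\<^sub>R x = (x::'a::real_vector)"
  by (simp flip: scaleR_add_left)

lemma pm_zero: "x + y = 0 \<Longrightarrow> x - y = 0 \<Longrightarrow> x = (0::'a::real_vector) \<and> y = 0"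
proof -
  assume h: "x + y = 0" "x - y = 0"
  have "(2::real) *\<^sub>R x = (x + y) + (x - y)" by (simp add: scaleR_2)
  then have "x = 0" using h by simp
  then show ?thesis using h by simp
qed

context gp begin

lemma JF[simp]: "J (F u) = F (J u)" by (simp add: comm)
lemma FJF[simp]: "F (J (F u)) = J u" by (metis FF comm)

lemmas LS = lin_simps

lemma Hplus_iff: "u \<in> Hplus F J \<longleftrightarrow> F (rp u) = rp u \<and> F (ip u) = ip u \<and> F (J (rp u)) = - ip u \<and> F (J (ip u)) = rp u"
  by (auto simp: Hplus_def Fplus_iff Hbun_iff)
lemma Hminus_iff: "u \<in> Hminus F J \<longleftrightarrow> F (rp u) = - rp u \<and> F (ip u) = - ip u \<and> F (J (rp u)) = - ip u \<and> F (J (ip u)) = rp u"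
  by (auto simp: Hminus_def Fminus_iff Hbun_iff)
lemma bHplus_iff: "u \<in> bar (Hplus F J) \<longleftrightarrow> F (rp u) = rp u \<and> F (ip u) = ip u \<and> F (J (rp u)) = ip u \<and> F (J (ip u)) = - rp u"
  by (auto simp: bar_iff Hplus_iff LS minus_equation_iff)
lemma bHminus_iff: "u \<in> bar (Hminus F J) \<longleftrightarrow> F (rp u) = - rp u \<and> F (ip u) = - ip u \<and> F (J (rp u)) = ip u \<and> F (J (ip u)) = - rp u"
  by (auto simp: bar_iff Hminus_iff LS minus_equation_iff)

lemma Fplus_sum: "Fplus F = setsum2 (Hplus F J) (bar (Hplus F J))"
proof (intro set_eqI iffI)
  fix u assume u: "u \<in> Fplus F"
  define r where "r = rp u"
  define s where "s = ip u"
  have Fr: "F r = r" and Fs: "F s = s" using u by (simp_all add: Fplus_iff r_def s_def)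
  have FJr: "F (J r) = J r" by (metis FJF Fr)
  have FJs: "F (J s) = J s" by (metis FJF Fs)
  define a where "a = mk ((1/2) *\<^sub>R (r + F (J s))) ((1/2) *\<^sub>R (s - F (J r)))"
  define c where "c = mk ((1/2) *\<^sub>R (r - F (J s))) ((1/2) *\<^sub>R (s + F (J r)))"
  have "a \<in> Hplus F J" unfolding a_def Hplus_iff using Fr Fs
    by (simp add: LS algebra_simps FJr FJs)
  moreover have "c \<in> bar (Hplus F J)" unfolding c_def bHplus_iff using Fr Fs
    by (simp add: LS algebra_simps FJr FJs)
  moreover have "u = a + c" by (simp add: cgtan_eq_iff a_def c_def r_def s_def algebra_simps)
  ultimately show "u \<in> setsum2 (Hplus F J) (bar (Hplus F J))" unfolding setsum2_def by blast
next
  fix u assume "u \<in> setsum2 (Hplus F J) (bar (Hplus F J))"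
  then obtain a c where "a \<in> Hplus F J" "c \<in> bar (Hplus F J)" "u = a + c" unfolding setsum2_def by blast
  then show "u \<in> Fplus F" by (simp add: Fplus_iff Hplus_iff bHplus_iff LS)
qed

lemma Fminus_sum: "Fminus F = setsum2 (Hminus F J) (bar (Hminus F J))"
proof (intro set_eqI iffI)
  fix u assume u: "u \<in> Fminus F"
  define r where "r = rp u"
  define s where "s = ip u"
  have Fr: "F r = - r" and Fs: "F s = - s" using u by (simp_all add: Fminus_iff r_def s_def)
  have "J r = F (J (F r))" by simp
  also have "\<dots> = - F (J r)" by (simp only: Fr J_neg F_neg)
  finally have FJr: "F (J r) = - J r" by (metis minus_minus)
  have "J s = F (J (F s))" by simp
  also have "\<dots> = - F (J s)" by (simp only: Fs J_neg F_neg)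
  finally have FJs: "F (J s) = - J s" by (metis minus_minus)
  define a where "a = mk ((1/2) *\<^sub>R (r + F (J s))) ((1/2) *\<^sub>R (s - F (J r)))"
  define c where "c = mk ((1/2) *\<^sub>R (r - F (J s))) ((1/2) *\<^sub>R (s + F (J r)))"
  have "a \<in> Hminus F J" unfolding a_def Hminus_iff using Fr Fs
    by (simp add: LS algebra_simps FJr FJs)
  moreover have "c \<in> bar (Hminus F J)" unfolding c_def bHminus_iff using Fr Fs
    by (simp add: LS algebra_simps FJr FJs)
  moreover have "u = a + c" by (simp add: cgtan_eq_iff a_def c_def r_def s_def algebra_simps)
  ultimately show "u \<in> setsum2 (Hminus F J) (bar (Hminus F J))" unfolding setsum2_def by blast
next
  fix u assume "u \<in> setsum2 (Hminus F J) (bar (Hminus F J))"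
  then obtain a c where "a \<in> Hminus F J" "c \<in> bar (Hminus F J)" "u = a + c" unfolding setsum2_def by blast
  then show "u \<in> Fminus F" by (simp add: Fminus_iff Hminus_iff bHminus_iff LS)
qed

lemma J_via_H: "J x = F (F (J x))" by simp

lemma Jeig_sum: "Jeig J = setsum2 (Hplus F J) (bar (Hminus F J))"
proof (intro set_eqI iffI)
  fix u assume u: "u \<in> Jeig J"
  define r where "r = rp u"
  define s where "s = ip u"
  have Jr: "J r = - s" and Js: "J s = r" using u by (simp_all add: Jeig_iff r_def s_def)
  define a where "a = mk ((1/2) *\<^sub>R (r + F r)) ((1/2) *\<^sub>R (s + F s))"
  define d where "d = mk ((1/2) *\<^sub>R (r - F r)) ((1/2) *\<^sub>R (s - F s))"
  have "a \<in> Hplus F J" unfolding a_def Hplus_iff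
    by (simp add: LS algebra_simps Jr Js)
  moreover have "d \<in> bar (Hminus F J)" unfolding d_def bHminus_iff
    by (simp add: LS algebra_simps Jr Js)
  moreover have "u = a + d" by (simp add: cgtan_eq_iff a_def d_def r_def s_def algebra_simps)
  ultimately show "u \<in> setsum2 (Hplus F J) (bar (Hminus F J))" unfolding setsum2_def by blast
next
  fix u assume "u \<in> setsum2 (Hplus F J) (bar (Hminus F J))"
  then obtain a c where a: "a \<in> Hplus F J" and c: "c \<in> bar (Hminus F J)" and "u = a + c" unfolding setsum2_def by blast
  note A = a[unfolded Hplus_iff] and C = c[unfolded bHminus_iff]
  have "J (rp a) = F (F (J (rp a)))" "J (ip a) = F (F (J (ip a)))"
       "J (rp c) = F (F (J (rp c)))" "J (ip c) = F (F (J (ip c)))" by simp_all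
  then have "J (rp a) = - ip a \<and> J (ip a) = rp a" "J (rp c) = - ip c \<and> J (ip c) = rp c"
    using A C by (simp_all only: F_neg) simp_all
  then show "u \<in> Jeig J" using \<open>u = a + c\<close> by (simp add: Jeig_iff LS)
qed

lemma zero_decomp:
  assumes a: "a \<in> Hplus F J" and b: "b \<in> Hminus F J" and c: "c \<in> bar (Hplus F J)"
    and d: "d \<in> bar (Hminus F J)" and e: "a + b + c + d = 0"
  shows "a = 0 \<and> b = 0 \<and> c = 0 \<and> d = 0"
proof -
  note A = a[unfolded Hplus_iff] and B = b[unfolded Hminus_iff]
    and C = c[unfolded bHplus_iff] and D = d[unfolded bHminus_iff]
  have E1: "rp a + rp b + rp c + rp d = 0" using e by (metis rp_add rp_zero)
  have E2: "ip a + ip b + ip c + ip d = 0" using e by (metis ip_add ip_zero)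
  have "F (rp a + rp b + rp c + rp d) = 0" using E1 by (simp add: LS)
  then have E1F: "rp a - rp b + rp c - rp d = 0" using A B C D by (simp add: LS)
  have "F (ip a + ip b + ip c + ip d) = 0" using E2 by (simp add: LS)
  then have E2F: "ip a - ip b + ip c - ip d = 0" using A B C D by (simp add: LS)
  have P: "rp a + rp c = 0" and Q: "rp b + rp d = 0"
    using pm_zero[of "rp a + rp c" "rp b + rp d"] E1 E1F by (simp_all add: algebra_simps)
  have S: "ip a + ip c = 0" and T: "ip b + ip d = 0"
    using pm_zero[of "ip a + ip c" "ip b + ip d"] E2 E2F by (simp_all add: algebra_simps)
  have "F (J (rp a + rp c)) = 0" using P by (simp add: LS)
  then have "ip c - ip a = 0" using A C by (simp add: LS algebra_simps)
  then have ia: "ip a = 0" and ic: "ip c = 0" using pm_zero[of "ip c" "ip a"] S by (simp_all add: algebra_simps)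
  have "F (J (rp b + rp d)) = 0" using Q by (simp add: LS)
  then have "ip d - ip b = 0" using B D by (simp add: LS algebra_simps)
  then have ib: "ip b = 0" and id: "ip d = 0" using pm_zero[of "ip d" "ip b"] T by (simp_all add: algebra_simps)
  have "F (J (ip a + ip c)) = 0" using S by (simp add: LS)
  then have "rp a - rp c = 0" using A C by (simp add: LS algebra_simps)
  then have ra: "rp a = 0" and rc: "rp c = 0" using pm_zero[of "rp a" "rp c"] P by (simp_all add: algebra_simps)
  have "F (J (ip b + ip d)) = 0" using T by (simp add: LS)
  then have "rp b - rp d = 0" using B D by (simp add: LS algebra_simps)
  then have rb: "rp b = 0" and rd: "rp d = 0" using pm_zero[of "rp b" "rp d"] Q by (simp_all add: algebra_simps)
  show ?thesis using ra rb rc rd ia ib ic id by (simp add: cgtan_eq_iff)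
qed

lemma Hplus_diff: "a \<in> Hplus F J \<Longrightarrow> a' \<in> Hplus F J \<Longrightarrow> a - a' \<in> Hplus F J"
  by (simp add: Hplus_iff LS)
lemma Hminus_diff: "a \<in> Hminus F J \<Longrightarrow> a' \<in> Hminus F J \<Longrightarrow> a - a' \<in> Hminus F J"
  by (simp add: Hminus_iff LS)
lemma bHplus_diff: "a \<in> bar (Hplus F J) \<Longrightarrow> a' \<in> bar (Hplus F J) \<Longrightarrow> a - a' \<in> bar (Hplus F J)"
  by (simp add: bHplus_iff LS)
lemma bHminus_diff: "a \<in> bar (Hminus F J) \<Longrightarrow> a' \<in> bar (Hminus F J) \<Longrightarrow> a - a' \<in> bar (Hminus F J)"
  by (simp add: bHminus_iff LS)

lemma dsum: "direct_sum4 (Hplus F J) (Hminus F J) (bar (Hplus F J)) (bar (Hminus F J))"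
  unfolding direct_sum4_def
proof
  fix u :: "'m cgtan"
  define r where "r = rp u"
  define s where "s = ip u"
  define p where "p = mk ((1/2) *\<^sub>R (r + F r)) ((1/2) *\<^sub>R (s + F s))"
  define m where "m = mk ((1/2) *\<^sub>R (r - F r)) ((1/2) *\<^sub>R (s - F s))"
  have "p \<in> Fplus F" by (simp add: p_def Fplus_iff LS algebra_simps)
  then obtain a c where a: "a \<in> Hplus F J" and c: "c \<in> bar (Hplus F J)" and pac: "p = a + c"
    unfolding Fplus_sum setsum2_def by blast
  have "m \<in> Fminus F" by (simp add: m_def Fminus_iff LS algebra_simps)
  then obtain b d where b: "b \<in> Hminus F J" and d: "d \<in> bar (Hminus F J)" and mbd: "m = b + d"
    unfolding Fminus_sum setsum2_def by blast
  have upm: "u = p + m" by (simp add: cgtan_eq_iff p_def m_def r_def s_def algebra_simps)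
  show "\<exists>!(a,b,c,d). a \<in> Hplus F J \<and> b \<in> Hminus F J \<and> c \<in> bar (Hplus F J) \<and> d \<in> bar (Hminus F J) \<and> u = a + b + c + d"
  proof (rule ex1I[where a="(a,b,c,d)"])
    show "case (a,b,c,d) of (a,b,c,d) \<Rightarrow> a \<in> Hplus F J \<and> b \<in> Hminus F J \<and> c \<in> bar (Hplus F J) \<and> d \<in> bar (Hminus F J) \<and> u = a + b + c + d"
      using a b c d upm pac mbd by (simp add: algebra_simps)
  next
    fix x assume "case x of (a,b,c,d) \<Rightarrow> a \<in> Hplus F J \<and> b \<in> Hminus F J \<and> c \<in> bar (Hplus F J) \<and> d \<in> bar (Hminus F J) \<and> u = a + b + c + d"
    then obtain a' b' c' d' where x: "x = (a',b',c',d')" and a': "a' \<in> Hplus F J" and b': "b' \<in> Hminus F J"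
      and c': "c' \<in> bar (Hplus F J)" and d': "d' \<in> bar (Hminus F J)" and u': "u = a' + b' + c' + d'"
      by (cases x) auto
    have "(a' - a) + (b' - b) + (c' - c) + (d' - d) = 0"
      using u' upm pac mbd by (simp add: algebra_simps)
    then have "a' - a = 0 \<and> b' - b = 0 \<and> c' - c = 0 \<and> d' - d = 0"
      by (rule zero_decomp[OF Hplus_diff[OF a' a] Hminus_diff[OF b' b] bHplus_diff[OF c' c] bHminus_diff[OF d' d]])
    then show "x = (a,b,c,d)" using x by simp
  qed
qed

end


definition pbr :: "(real^'n::finite \<Rightarrow> real^'m::finite) \<Rightarrow> real^'m \<Rightarrow> real^'n" where
  "pbr \<iota> v = (\<chi> j. v \<bullet> \<iota> (axis j 1))"

definition cnjV :: "complex^'m::finite \<Rightarrow> complex^'m" where "cnjV z = (\<chi> i. cnj (z $ i))"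

lemma basis_exp_real: "(\<Sum>i\<in>UNIV. (Y $ i) *\<^sub>R axis i 1) = (Y::real^'n::finite)"
  using basis_expansion[of Y] by (simp add: scalar_mult_eq_scaleR)

lemma pbr_inner: assumes "linear \<iota>" shows "pbr \<iota> v \<bullet> Y = v \<bullet> \<iota> Y"
proof -
  have "\<iota> Y = (\<Sum>i\<in>UNIV. (Y $ i) *\<^sub>R \<iota> (axis i 1))"
    using assms basis_exp_real[of Y] by (metis (no_types, lifting) linear_scale linear_sum sum.cong)
  then have "v \<bullet> \<iota> Y = (\<Sum>i\<in>UNIV. (Y $ i) * (v \<bullet> \<iota> (axis i 1)))"
    by (simp add: inner_sum_right)
  also have "\<dots> = pbr \<iota> v \<bullet> Y" by (simp add: pbr_def inner_vec_def mult.commute)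
  finally show ?thesis by simp
qed

lemma lin_pbr: "linear (pbr \<iota>)"
  by (rule linearI) (simp_all add: pbr_def vec_eq_iff inner_add_left)

lemma pbr_add: "pbr \<iota> (a + b) = pbr \<iota> a + pbr \<iota> b" by (simp add: pbr_def vec_eq_iff inner_add_left)
lemma pbr_neg: "pbr \<iota> (- a) = - pbr \<iota> a" by (simp add: pbr_def vec_eq_iff)
lemma pbr_diff: "pbr \<iota> (a - b) = pbr \<iota> a - pbr \<iota> b" by (simp add: pbr_def vec_eq_iff inner_diff_left)
lemma pbr_0: "pbr \<iota> 0 = 0" by (simp add: pbr_def vec_eq_iff)

lemma reV_axis1: "reV (axis j (1::complex)) = axis j 1"
  by (simp add: reV_def axis_def vec_eq_iff)
lemma imV_axis1: "imV (axis j (1::complex)) = 0"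
  by (simp add: imV_def axis_def vec_eq_iff)

lemma reV_cx: "reV (cx \<iota> X) = \<iota> (reV X)" by (simp add: cx_def)
lemma imV_cx: "imV (cx \<iota> X) = \<iota> (imV X)" by (simp add: cx_def)

lemma pb_cov_eq: assumes "linear \<iota>"
  shows "pb_cov \<iota> \<eta> = cmb (pbr \<iota> (reV \<eta>)) (pbr \<iota> (imV \<eta>))"
proof -
  have c: "cx \<iota> (axis j 1) = cmb (\<iota> (axis j 1)) 0" for j
    using assms by (simp add: cx_def reV_axis1 imV_axis1 linear_0)
  show ?thesis
    by (simp add: pb_cov_def c dotc_def cmb_def pbr_def vec_eq_iff inner_vec_def reV_def imV_def
        complex_eq_iff)
qed

lemma pbT_iff: "u \<in> pbT \<iota> U \<longleftrightarrow> (\<exists>\<eta>. (cx \<iota> (fst u), \<eta>) \<in> U \<and> snd u = pb_cov \<iota> \<eta>)"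
  by (cases u) (auto simp: pbT_def)

lemma cnjV_cmb: "cnjV z = cmb (reV z) (- imV z)"
  by (simp add: cnjV_def cmb_def reV_def imV_def vec_eq_iff complex_eq_iff)
lemma cnjT_eq: "cnjT u = (cnjV (fst u), cnjV (snd u))" by (simp add: cnjT_def cnjV_def)
lemma cnjV_cnjV[simp]: "cnjV (cnjV z) = z" by (simp add: cnjV_def vec_eq_iff)
lemma cnjV_cx: "linear \<iota> \<Longrightarrow> cnjV (cx \<iota> X) = cx \<iota> (cnjV X)"
  by (simp add: cnjV_cmb cx_def linear_neg)
lemma cnjV_pb: "linear \<iota> \<Longrightarrow> cnjV (pb_cov \<iota> \<eta>) = pb_cov \<iota> (cnjV \<eta>)"
  by (simp add: cnjV_cmb pb_cov_eq pbr_neg)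

lemma pbT_bar: assumes "linear \<iota>" shows "pbT \<iota> (bar U) = bar (pbT \<iota> U)"
proof (intro set_eqI iffI)
  fix u assume "u \<in> pbT \<iota> (bar U)"
  then obtain \<eta> where h: "cnjT (cx \<iota> (fst u), \<eta>) \<in> U" "snd u = pb_cov \<iota> \<eta>"
    unfolding pbT_iff bar_iff by blast
  then have "(cx \<iota> (fst (cnjT u)), cnjV \<eta>) \<in> U \<and> snd (cnjT u) = pb_cov \<iota> (cnjV \<eta>)"
    using assms by (simp add: cnjT_eq cnjV_cx cnjV_pb)
  then show "u \<in> bar (pbT \<iota> U)" unfolding bar_iff pbT_iff by blast
next
  fix u assume "u \<in> bar (pbT \<iota> U)"
  then obtain \<eta> where h: "(cx \<iota> (fst (cnjT u)), \<eta>) \<in> U" "snd (cnjT u) = pb_cov \<iota> \<eta>"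
    unfolding pbT_iff bar_iff by blast
  then have "cnjT (cx \<iota> (fst u), cnjV \<eta>) \<in> U \<and> snd u = pb_cov \<iota> (cnjV \<eta>)"
    using assms by (simp add: cnjT_eq cnjV_cx cnjV_pb) (metis cnjV_cnjV cnjV_pb assms)
  then show "u \<in> pbT \<iota> (bar U)" unfolding bar_iff pbT_iff by blast
qed

lemma cxT_neg: "linear f \<Longrightarrow> cxT f (- u) = - cxT f u"
  by (simp add: cgtan_eq_iff linear_neg)
lemma cxT_add: "linear f \<Longrightarrow> cxT f (u + v) = cxT f u + cxT f v"
  by (simp add: cgtan_eq_iff linear_add)
lemma cxT_scT: "linear f \<Longrightarrow> cxT f (scT \<i> u) = scT \<i> (cxT f u)"
  by (simp add: cgtan_eq_iff linear_neg)
lemma cxT_id: "cxT id u = u" by (simp add: cgtan_eq_iff)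
lemma cxT_id': "(\<And>x. f x = x) \<Longrightarrow> cxT f u = u" by (simp add: cgtan_eq_iff)


locale subm = gp F J for F J :: "'m::finite gtan \<Rightarrow> 'm gtan" +
  fixes \<iota> :: "real^'n::finite \<Rightarrow> real^'m" and gl :: "real^'m \<Rightarrow> real^'n"
  assumes lin_i: "linear \<iota>" and lin_gl: "linear gl" and gl_i[simp]: "\<And>x. gl (\<iota> x) = x"
begin

lemma i_add: "\<iota> (a + b) = \<iota> a + \<iota> b" using lin_i by (simp add: linear_add)
lemma i_diff: "\<iota> (a - b) = \<iota> a - \<iota> b" using lin_i by (simp add: linear_diff)
lemma i_neg: "\<iota> (- a) = - \<iota> a" using lin_i by (simp add: linear_neg)
lemma i_0: "\<iota> 0 = 0" using lin_i by (simp add: linear_0)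
lemma i_scale: "\<iota> (c *\<^sub>R a) = c *\<^sub>R \<iota> a" using lin_i by (simp add: linear_scale)
lemmas iS = i_add i_diff i_neg i_0 i_scale

definition Lm where "Lm W = pbr \<iota> (gfl F J (\<iota> W))"
definition PN where "PN X = pbr \<iota> (pfl F J (\<iota> X))"
definition form where "form X W = (\<iota> X, pfl F J (\<iota> X) + gfl F J (\<iota> W))"
definition Pm where "Pm u = (gl (fst u), pbr \<iota> (snd u))"

lemma lin_Lm: "linear Lm"
  by (rule linearI) (simp_all add: Lm_def iS fl_simps pbr_add lin_pbr linear_scale)
lemma lin_PN: "linear PN"
  by (rule linearI) (simp_all add: PN_def iS fl_simps pbr_add lin_pbr linear_scale)
lemma lin_Pm: "linear Pm"
  by (rule linearI) (simp_all add: Pm_def pbr_add lin_pbr linear_scale lin_gl linear_add)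

lemma Lm_inner: "Lm W \<bullet> Y = metric F J (\<iota> W) (\<iota> Y)"
  by (simp add: Lm_def pbr_inner lin_i metric_eq2)

lemma Pm_form: "Pm (form X W) = (X, PN X + Lm W)"
  by (simp add: Pm_def form_def pbr_add PN_def Lm_def)

lemma gR_Pm: assumes "fst s = \<iota> X" "fst s' = \<iota> X'" shows "gR (Pm s) (Pm s') = gR s s'"
  using assms by (simp add: gR_def Pm_def pbr_inner lin_i)

lemma form_add: "form X W + form X' W' = form (X + X') (W + W')"
  by (simp add: form_def iS fl_simps)
lemma form_neg: "- form X W = form (- X) (- W)"
  by (simp add: form_def iS fl_simps)

lemma I1i: "F (J (0, gfl F J Y)) = (Y, pfl F J Y)" by (rule I1)

lemma Hform: "F (J (form X W)) = form W (- X)"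
proof -
  have "form X W = (\<iota> X, pfl F J (\<iota> X)) + (0, gfl F J (\<iota> W))" by (simp add: form_def)
  then have "F (J (form X W)) = F (J (\<iota> X, pfl F J (\<iota> X))) + F (J (0, gfl F J (\<iota> W)))"
    by (simp only: F_add J_add)
  also have "\<dots> = form W (- X)" by (simp add: I1 I2 form_def iS fl_simps)
  finally show ?thesis .
qed

end

locale subri = subm +
  assumes inj_i: "inj \<iota>" and RI: "regular_invariant F J \<iota>"
begin

lemma RIa: "(\<And>Y. metric F J (\<iota> X) (\<iota> Y) = 0) \<Longrightarrow> X = 0"
  using RI unfolding regular_invariant_def pb_form_def by blast
lemma RIb: "\<exists>Y. Fop F J (cx \<iota> X) = cx \<iota> Y"
  using RI unfolding regular_invariant_def by blast

lemma Lm_inj: "inj Lm"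
proof -
  have "W = 0" if "Lm W = 0" for W
  proof (rule RIa)
    fix Y show "metric F J (\<iota> W) (\<iota> Y) = 0" using Lm_inner[of W Y] that by simp
  qed
  then show ?thesis using lin_Lm by (simp add: linear_injective_0)
qed
lemma Lm_surj: "surj Lm" using lin_Lm Lm_inj linear_injective_imp_surjective by blast

definition Li where "Li = inv Lm"
lemma Lm_Li[simp]: "Lm (Li v) = v" unfolding Li_def using Lm_surj by (simp add: surj_f_inv_f)
lemma Li_Lm[simp]: "Li (Lm W) = W" unfolding Li_def using Lm_inj by simp
lemma lin_Li: "linear Li"
proof (rule linearI)
  fix a b
  have "Li (a + b) = Li (Lm (Li a) + Lm (Li b))" by simp
  also have "\<dots> = Li (Lm (Li a + Li b))" using lin_Lm by (simp only: linear_add)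
  finally show "Li (a + b) = Li a + Li b" by simp
next
  fix c :: real and a
  have "Li (c *\<^sub>R a) = Li (c *\<^sub>R Lm (Li a))" by simp
  also have "\<dots> = Li (Lm (c *\<^sub>R Li a))" using lin_Lm by (simp only: linear_scale)
  finally show "Li (c *\<^sub>R a) = c *\<^sub>R Li a" by simp
qed

definition Em where "Em u = form (fst u) (Li (snd u - PN (fst u)))"

lemma PN_add: "PN (a + b) = PN a + PN b" using lin_PN by (simp add: linear_add)
lemma PN_scale: "PN (c *\<^sub>R a) = c *\<^sub>R PN a" using lin_PN by (simp add: linear_scale)
lemma Li_add: "Li (a + b) = Li a + Li b" using lin_Li by (simp add: linear_add)
lemma Li_scale: "Li (c *\<^sub>R a) = c *\<^sub>R Li a" using lin_Li by (simp add: linear_scale)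
lemma form_scale: "c *\<^sub>R form X W = form (c *\<^sub>R X) (c *\<^sub>R W)"
  by (simp add: form_def iS fl_simps scaleR_add_right)

lemma lin_Em: "linear Em"
proof (rule linearI)
  fix a b
  show "Em (a + b) = Em a + Em b"
  proof -
    have "snd (a + b) - PN (fst (a + b)) = (snd a - PN (fst a)) + (snd b - PN (fst b))"
      by (simp add: PN_add algebra_simps)
    then show ?thesis by (simp only: Em_def Li_add form_add fst_add)
  qed
next
  fix c :: real and a
  show "Em (c *\<^sub>R a) = c *\<^sub>R Em a"
  proof -
    have "snd (c *\<^sub>R a) - PN (fst (c *\<^sub>R a)) = c *\<^sub>R (snd a - PN (fst a))"
      by (simp add: PN_scale algebra_simps)
    then show ?thesis by (simp only: Em_def Li_scale form_scale fst_scaleR)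
  qed
qed

lemma Pm_Em[simp]: "Pm (Em u) = u"
  by (simp add: Em_def Pm_form)
lemma Em_Pm_form[simp]: "Em (Pm (form X W)) = form X W"
  by (simp add: Pm_form Em_def)

lemma Fpart: "\<exists>a b. F (\<iota> Z, pfl F J (\<iota> Z)) = form a (- b) \<and> F (0, gfl F J (\<iota> Z)) = form b a"
proof -
  define r where "r = F (\<iota> Z, pfl F J (\<iota> Z))"
  define s where "s = F (0, gfl F J (\<iota> Z))"
  obtain Y where Y: "Fop F J (cx \<iota> (cmb Z 0)) = cx \<iota> Y" using RIb by blast
  have "cx \<iota> (cmb Z 0) = cmb (\<iota> Z) 0" by (simp add: cx_def iS)
  moreover have "Fop F J (cmb (\<iota> Z) 0) = cmb (fst r) (fst s)"
    by (simp add: Fop_eq rp_tau ip_tau r_def s_def fl_simps)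
  ultimately have "cmb (fst r) (fst s) = cmb (\<iota> (reV Y)) (\<iota> (imV Y))" using Y by (simp add: cx_def)
  then have fr: "fst r = \<iota> (reV Y)" and fs: "fst s = \<iota> (imV Y)" by (simp_all add: cmb_eq_iff)
  have "F (J r) = J (\<iota> Z, pfl F J (\<iota> Z))" by (simp add: r_def)
  also have "\<dots> = F (F (J (\<iota> Z, pfl F J (\<iota> Z))))" by simp
  also have "\<dots> = - s" by (simp only: I2 F_neg s_def)
  finally have h1: "F (J r) = - s" .
  have "F (J s) = J (0, gfl F J (\<iota> Z))" by (simp add: s_def)
  also have "\<dots> = F (F (J (0, gfl F J (\<iota> Z))))" by simp
  also have "\<dots> = r" by (simp only: I1 r_def)
  finally have h2: "F (J s) = r" .
  from graph_real[OF h1 h2] fr fs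
  have "r = form (reV Y) (- imV Y) \<and> s = form (imV Y) (reV Y)"
    by (simp add: form_def prod_eq_iff iS fl_simps)
  then show ?thesis unfolding r_def s_def by blast
qed

lemma Fform: "\<exists>X' W'. F (form X W) = form X' W'"
proof -
  obtain a b where ab: "F (\<iota> X, pfl F J (\<iota> X)) = form a (- b)" using Fpart by blast
  obtain a' b' where ab': "F (0, gfl F J (\<iota> W)) = form b' a'" using Fpart by blast
  have "form X W = (\<iota> X, pfl F J (\<iota> X)) + (0, gfl F J (\<iota> W))" by (simp add: form_def)
  then have "F (form X W) = F (\<iota> X, pfl F J (\<iota> X)) + F (0, gfl F J (\<iota> W))"
    by (simp only: F_add)
  also have "\<dots> = form (a + b') (- b + a')" by (simp add: ab ab' form_add)
  finally show ?thesis by blast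
qed

lemma Jform: "\<exists>X' W'. J (form X W) = form X' W'"
proof -
  have "J (form X W) = F (F (J (form X W)))" by simp
  also have "\<dots> = F (form W (- X))" by (simp only: Hform)
  moreover obtain X' W' where "F (form W (- X)) = form X' W'" using Fform by blast
  ultimately show ?thesis by auto
qed

lemma Em_form: "\<exists>X W. Em u = form X W" by (auto simp: Em_def)

lemma FEm_form: "\<exists>X W. F (Em u) = form X W"
proof -
  obtain X W where "Em u = form X W" using Em_form by blast
  moreover obtain X' W' where "F (form X W) = form X' W'" using Fform by blast
  ultimately show ?thesis by auto
qed
lemma JEm_form: "\<exists>X W. J (Em u) = form X W"
proof -
  obtain X W where "Em u = form X W" using Em_form by blast
  moreover obtain X' W' where "J (form X W) = form X' W'" using Jform by blast
  ultimately show ?thesis by auto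
qed
lemma EPF[simp]: "Em (Pm (F (Em u))) = F (Em u)"
  using FEm_form[of u] by auto
lemma EPJ[simp]: "Em (Pm (J (Em u))) = J (Em u)"
  using JEm_form[of u] by auto

definition FN where "FN u = Pm (F (Em u))"
definition JN where "JN u = Pm (J (Em u))"

lemma EFN: "Em (FN u) = F (Em u)" by (simp add: FN_def)
lemma EJN: "Em (JN u) = J (Em u)" by (simp add: JN_def)

lemma fst_form: "fst (form X W) = \<iota> X" by (simp add: form_def)

lemma Em_fst: "\<exists>X. fst (Em u) = \<iota> X" by (auto simp: Em_def fst_form)
lemma FEm_fst: "\<exists>X. fst (F (Em u)) = \<iota> X" using FEm_form[of u] fst_form by auto
lemma JEm_fst: "\<exists>X. fst (J (Em u)) = \<iota> X" using JEm_form[of u] fst_form by auto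

lemma gR_PE: assumes "\<exists>X. fst s = \<iota> X" "\<exists>X. fst s' = \<iota> X" shows "gR (Pm s) (Pm s') = gR s s'"
  using assms gR_Pm by blast

lemma gaph_N: "gaph FN JN"
  unfolding gaph_def
proof (intro conjI allI impI)
  show "linear FN" unfolding FN_def[abs_def]
    using linear_compose[OF lin_Em linear_compose[OF linF lin_Pm]] by (simp add: o_def)
  show "linear JN" unfolding JN_def[abs_def]
    using linear_compose[OF lin_Em linear_compose[OF linJ lin_Pm]] by (simp add: o_def)
  fix u show "FN (FN u) = u" by (simp add: FN_def)
  show "JN (JN u) = - u" by (simp add: JN_def linear_neg[OF lin_Pm])
  fix v
  show "gR (FN u) v = - gR u (FN v)"
  proof -
    have "gR (FN u) v = gR (Pm (F (Em u))) (Pm (Em v))" by (simp add: FN_def)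
    also have "\<dots> = gR (F (Em u)) (Em v)" by (rule gR_PE[OF FEm_fst Em_fst])
    also have "\<dots> = - gR (Em u) (F (Em v))" by (rule skF)
    also have "gR (Em u) (F (Em v)) = gR (Pm (Em u)) (Pm (F (Em v)))" by (rule gR_PE[OF Em_fst FEm_fst, symmetric])
    finally show ?thesis by (simp add: FN_def)
  qed
  show "gR (JN u) v = - gR u (JN v)"
  proof -
    have "gR (JN u) v = gR (Pm (J (Em u))) (Pm (Em v))" by (simp add: JN_def)
    also have "\<dots> = gR (J (Em u)) (Em v)" by (rule gR_PE[OF JEm_fst Em_fst])
    also have "\<dots> = - gR (Em u) (J (Em v))" by (rule skJ)
    also have "gR (Em u) (J (Em v)) = gR (Pm (Em u)) (Pm (J (Em v)))" by (rule gR_PE[OF Em_fst JEm_fst, symmetric])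
    finally show ?thesis by (simp add: JN_def)
  qed
next
  fix u show "FN (JN u) = JN (FN u)" by (simp add: FN_def JN_def)
next
  have E0: "Em (0, a) = (0, gfl F J (\<iota> (Li a)))" for a
    using lin_PN by (simp add: Em_def form_def iS fl_simps linear_0)
  have bN: "bivec FN JN a b = bivec F J (gfl F J (\<iota> (Li a))) (gfl F J (\<iota> (Li b)))" for a b
  proof -
    have "bivec FN JN a b = -2 * gR (Pm (F (Em (0,a)))) (Pm (J (Em (0,b))))"
      by (simp add: bivec_def FN_def JN_def)
    also have "\<dots> = -2 * gR (F (Em (0,a))) (J (Em (0,b)))" by (simp only: gR_PE[OF FEm_fst JEm_fst])
    finally show ?thesis by (simp add: bivec_def E0)
  qed
  have bN2: "bivec FN JN a b = a \<bullet> Li b" for a b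
  proof -
    have "bivec FN JN a b = gfl F J (\<iota> (Li a)) \<bullet> \<iota> (Li b)" by (simp add: bN bivec_fst I1)
    also have "\<dots> = Lm (Li a) \<bullet> Li b" by (simp add: Lm_def pbr_inner lin_i)
    finally show ?thesis by simp
  qed
  fix a b show "bivec FN JN a b = bivec FN JN b a" by (simp add: bN bsym)
next
  fix a assume h: "\<forall>b. bivec FN JN a b = 0"
  have E0: "Em (0, a) = (0, gfl F J (\<iota> (Li a)))" for a
    using lin_PN by (simp add: Em_def form_def iS fl_simps linear_0)
  have "bivec FN JN a (Lm a) = a \<bullet> a"
  proof -
    have "bivec FN JN a (Lm a) = -2 * gR (Pm (F (Em (0,a)))) (Pm (J (Em (0,Lm a))))"
      by (simp add: bivec_def FN_def JN_def)
    also have "\<dots> = -2 * gR (F (Em (0,a))) (J (Em (0,Lm a)))" by (simp only: gR_PE[OF FEm_fst JEm_fst])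
    also have "\<dots> = bivec F J (gfl F J (\<iota> (Li a))) (gfl F J (\<iota> a))" by (simp add: E0 bivec_def)
    also have "\<dots> = gfl F J (\<iota> (Li a)) \<bullet> \<iota> a" by (simp add: bivec_fst I1)
    also have "\<dots> = Lm (Li a) \<bullet> a" by (simp add: Lm_def pbr_inner lin_i)
    finally show ?thesis by simp
  qed
  then show "a = 0" using h by simp
qed

end


context subri begin

lemma fst_Em: "fst (Em v) = \<iota> (fst v)" by (simp add: Em_def form_def)

lemma fst_cxT_Em: "fst (cxT Em u) = cx \<iota> (fst u)"
  by (simp add: cxT_mk mk_def fst_Em cx_def rp_def ip_def)

lemma cxT_Pm: assumes "fst s = cx \<iota> X" shows "cxT Pm s = (X, pb_cov \<iota> (snd s))"
  using assms by (simp add: cxT_mk mk_def Pm_def rp_def ip_def reV_cx imV_cx pb_cov_eq lin_i)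

lemma Hbun_SE: assumes "s \<in> Hbun F J" "fst s = cx \<iota> X" shows "cxT Em (cxT Pm s) = s"
proof -
  from assms(1) have a: "F (J (rp s)) = - ip s" "F (J (ip s)) = rp s" by (simp_all add: Hbun_iff)
  from graph_real[OF a] have g: "snd (rp s) = pfl F J (fst (rp s)) - gfl F J (fst (ip s))"
    "snd (ip s) = pfl F J (fst (ip s)) + gfl F J (fst (rp s))" by auto
  have fr: "fst (rp s) = \<iota> (reV X)" and fi: "fst (ip s) = \<iota> (imV X)"
    using assms(2) by (simp_all add: rp_def ip_def reV_cx imV_cx)
  have "rp s = form (reV X) (- imV X)" using g fr fi by (simp add: form_def prod_eq_iff iS fl_simps)
  moreover have "ip s = form (imV X) (reV X)" using g fr fi by (simp add: form_def prod_eq_iff)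
  ultimately show ?thesis by (simp add: cxT_comp cgtan_eq_iff)
qed

lemma FN_JN: "FN (JN x) = Pm (F (J (Em x)))" by (simp add: FN_def EJN)
lemma EFNJN: "Em (FN (JN x)) = F (J (Em x))" by (simp add: EFN EJN)

lemma FN_comp: "FN = Pm \<circ> (F \<circ> Em)" by (simp add: fun_eq_iff FN_def)
lemma FNJN_comp: "FN \<circ> JN = Pm \<circ> ((F \<circ> J) \<circ> Em)" by (simp add: fun_eq_iff FN_JN)
lemma FE_comp: "F \<circ> Em = Em \<circ> FN" by (simp add: fun_eq_iff EFN)
lemma FJE_comp: "(F \<circ> J) \<circ> Em = Em \<circ> (FN \<circ> JN)" by (simp add: fun_eq_iff EFNJN)

lemma PE_cxT: "cxT Pm (cxT Em u) = u" by (simp add: cxT_comp cxT_id')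

lemma Hplus_N: "Hplus FN JN = pbT \<iota> (Hplus F J)"
proof (intro set_eqI iffI)
  fix u assume "u \<in> Hplus FN JN"
  then have u1: "cxT FN u = u" and u2: "cxT (FN \<circ> JN) u = scT \<i> u"
    by (simp_all add: Hplus_def Fplus_def Hbun_def)
  define s where "s = cxT Em u"
  have "cxT F s = cxT Em (cxT FN u)" by (simp add: s_def cxT_comp FE_comp)
  then have s1: "cxT F s = s" by (simp add: u1 s_def)
  have "cxT (F \<circ> J) s = cxT Em (cxT (FN \<circ> JN) u)" by (simp add: s_def cxT_comp FJE_comp)
  then have s2: "cxT (F \<circ> J) s = scT \<i> s" by (simp add: u2 s_def cxT_scT lin_Em)
  have sH: "s \<in> Hplus F J" using s1 s2 by (simp add: Hplus_def Fplus_def Hbun_def)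
  have fs: "fst s = cx \<iota> (fst u)" by (simp add: s_def fst_cxT_Em)
  have "u = (fst u, pb_cov \<iota> (snd s))" using cxT_Pm[OF fs] PE_cxT[of u] by (simp add: s_def)
  then have "snd u = pb_cov \<iota> (snd s)" by (metis snd_conv)
  moreover have "(cx \<iota> (fst u), snd s) \<in> Hplus F J" using sH fs by (metis prod.collapse)
  ultimately show "u \<in> pbT \<iota> (Hplus F J)" unfolding pbT_iff by blast
next
  fix u assume "u \<in> pbT \<iota> (Hplus F J)"
  then obtain \<eta> where h: "(cx \<iota> (fst u), \<eta>) \<in> Hplus F J" "snd u = pb_cov \<iota> \<eta>" unfolding pbT_iff by blast
  define s where "s = (cx \<iota> (fst u), \<eta>)"
  have sH: "s \<in> Hplus F J" using h s_def by simp
  then have s1: "cxT F s = s" and s2: "cxT (F \<circ> J) s = scT \<i> s"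
    by (simp_all add: Hplus_def Fplus_def Hbun_def)
  have us: "u = cxT Pm s" using cxT_Pm[of s "fst u"] h by (simp add: s_def prod_eq_iff)
  have es: "cxT Em (cxT Pm s) = s" using Hbun_SE[of s "fst u"] sH by (simp add: s_def Hplus_def)
  have "cxT FN u = u" unfolding FN_comp us by (simp add: cxT_comp[symmetric] es s1)
  moreover have "cxT (FN \<circ> JN) u = scT \<i> u" unfolding FNJN_comp us
    using s2 by (simp add: cxT_comp[symmetric] es cxT_scT lin_Pm)
  ultimately show "u \<in> Hplus FN JN" by (simp add: Hplus_def Fplus_def Hbun_def)
qed

lemma Hminus_N: "Hminus FN JN = pbT \<iota> (Hminus F J)"
proof (intro set_eqI iffI)
  fix u assume "u \<in> Hminus FN JN"
  then have u1: "cxT FN u = - u" and u2: "cxT (FN \<circ> JN) u = scT \<i> u"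
    by (simp_all add: Hminus_def Fminus_def Hbun_def)
  define s where "s = cxT Em u"
  have "cxT F s = cxT Em (cxT FN u)" by (simp add: s_def cxT_comp FE_comp)
  then have s1: "cxT F s = - s" by (simp add: u1 s_def cxT_neg lin_Em)
  have "cxT (F \<circ> J) s = cxT Em (cxT (FN \<circ> JN) u)" by (simp add: s_def cxT_comp FJE_comp)
  then have s2: "cxT (F \<circ> J) s = scT \<i> s" by (simp add: u2 s_def cxT_scT lin_Em)
  have sH: "s \<in> Hminus F J" using s1 s2 by (simp add: Hminus_def Fminus_def Hbun_def)
  have fs: "fst s = cx \<iota> (fst u)" by (simp add: s_def fst_cxT_Em)
  have "u = (fst u, pb_cov \<iota> (snd s))" using cxT_Pm[OF fs] PE_cxT[of u] by (simp add: s_def)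
  then have "snd u = pb_cov \<iota> (snd s)" by (metis snd_conv)
  moreover have "(cx \<iota> (fst u), snd s) \<in> Hminus F J" using sH fs by (metis prod.collapse)
  ultimately show "u \<in> pbT \<iota> (Hminus F J)" unfolding pbT_iff by blast
next
  fix u assume "u \<in> pbT \<iota> (Hminus F J)"
  then obtain \<eta> where h: "(cx \<iota> (fst u), \<eta>) \<in> Hminus F J" "snd u = pb_cov \<iota> \<eta>" unfolding pbT_iff by blast
  define s where "s = (cx \<iota> (fst u), \<eta>)"
  have sH: "s \<in> Hminus F J" using h s_def by simp
  then have s1: "cxT F s = - s" and s2: "cxT (F \<circ> J) s = scT \<i> s"
    by (simp_all add: Hminus_def Fminus_def Hbun_def)
  have us: "u = cxT Pm s" using cxT_Pm[of s "fst u"] h by (simp add: s_def prod_eq_iff)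
  have es: "cxT Em (cxT Pm s) = s" using Hbun_SE[of s "fst u"] sH by (simp add: s_def Hminus_def)
  have "cxT FN u = - u" unfolding FN_comp us by (simp add: cxT_comp[symmetric] es s1 cxT_neg lin_Pm)
  moreover have "cxT (FN \<circ> JN) u = scT \<i> u" unfolding FNJN_comp us
    using s2 by (simp add: cxT_comp[symmetric] es cxT_scT lin_Pm)
  ultimately show "u \<in> Hminus FN JN" by (simp add: Hminus_def Fminus_def Hbun_def)
qed

lemma forward:
  "direct_sum4 (pbT \<iota> (Hplus F J)) (pbT \<iota> (Hminus F J))
                        (pbT \<iota> (bar (Hplus F J))) (pbT \<iota> (bar (Hminus F J))) \<and>
            (\<exists>A B. gaph A B \<and>
               Fplus A = setsum2 (pbT \<iota> (Hplus F J)) (pbT \<iota> (bar (Hplus F J))) \<and>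
               Fminus A = setsum2 (pbT \<iota> (Hminus F J)) (pbT \<iota> (bar (Hminus F J))) \<and>
               Jeig B = setsum2 (pbT \<iota> (Hplus F J)) (pbT \<iota> (bar (Hminus F J))))"
proof -
  interpret N: gp FN JN by (rule gp.intro, rule gaph_N)
  have b1: "pbT \<iota> (bar (Hplus F J)) = bar (Hplus FN JN)" by (simp add: pbT_bar lin_i Hplus_N)
  have b2: "pbT \<iota> (bar (Hminus F J)) = bar (Hminus FN JN)" by (simp add: pbT_bar lin_i Hminus_N)
  show ?thesis
    unfolding b1 b2 Hplus_N[symmetric] Hminus_N[symmetric]
    using N.dsum N.Fplus_sum N.Fminus_sum N.Jeig_sum gaph_N by blast
qed

end


lemma negself: "- x = (x::'a::real_vector) \<Longrightarrow> x = 0"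
proof -
  assume h: "- x = x"
  have "(2::real) *\<^sub>R x = x + x" by (simp add: scaleR_2)
  also have "\<dots> = 0" using h by (metis add.right_inverse)
  finally show "x = 0" by simp
qed

context gp begin

lemma tau_add: "tau F J (Y + Y') = tau F J Y + tau F J Y'"
  by (simp add: cgtan_eq_iff rp_tau ip_tau fl_simps algebra_simps)

lemma Fop_add: "Fop F J (Y + Y') = Fop F J Y + Fop F J Y'"
  by (simp add: Fop_def tau_add cxT_add linF)

lemma Fop_split: "Fop F J (cmb Y1 Y2) = cmb (reV (Fop F J (cmb Y1 0)) - imV (Fop F J (cmb Y2 0)))
      (imV (Fop F J (cmb Y1 0)) + reV (Fop F J (cmb Y2 0)))"
proof -
  have e1: "F (Y1, pfl F J Y1 - gfl F J Y2) = F (Y1, pfl F J Y1) - F (0, gfl F J Y2)"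
  proof -
    show ?thesis using F_diff[of "(Y1, pfl F J Y1)" "(0, gfl F J Y2)"] by simp
  qed
  have e2: "F (Y2, pfl F J Y2 + gfl F J Y1) = F (Y2, pfl F J Y2) + F (0, gfl F J Y1)"
  proof -
    show ?thesis using F_add[of "(Y2, pfl F J Y2)" "(0, gfl F J Y1)"] by simp
  qed
  have a: "Fop F J (cmb Y1 Y2) = cmb (fst (F (Y1, pfl F J Y1 - gfl F J Y2))) (fst (F (Y2, pfl F J Y2 + gfl F J Y1)))"
    by (simp add: Fop_eq rp_tau ip_tau)
  have b: "Fop F J (cmb Y 0) = cmb (fst (F (Y, pfl F J Y))) (fst (F (0, gfl F J Y)))" for Y
    by (simp add: Fop_eq rp_tau ip_tau fl_simps)
  show ?thesis unfolding a b e1 e2 by (simp add: algebra_simps)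
qed

lemma Hbun_bar_zero: "x \<in> Hbun F J \<Longrightarrow> x \<in> bar (Hbun F J) \<Longrightarrow> x = 0"
proof -
  assume a: "x \<in> Hbun F J" and b: "x \<in> bar (Hbun F J)"
  from a have a1: "F (J (rp x)) = - ip x" "F (J (ip x)) = rp x" by (simp_all add: Hbun_iff)
  from b have b1: "F (J (rp x)) = ip x" "F (J (ip x)) = - rp x" by (simp_all add: bar_iff Hbun_iff LS minus_equation_iff)
  have "ip x = 0" using a1(1) b1(1) negself[of "ip x"] by simp
  moreover have "rp x = 0" using a1(2) b1(2) negself[of "rp x"] by simp
  ultimately show "x = 0" by (simp add: cgtan_eq_iff)
qed

lemma FJ_Hbun: assumes "x \<in> Fplus F" "x \<in> Jeig J" shows "x \<in> Hbun F J"
proof -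
  have f: "F (rp x) = rp x" "F (ip x) = ip x" using assms(1) by (simp_all add: Fplus_iff)
  have j: "J (rp x) = - ip x" "J (ip x) = rp x" using assms(2) by (simp_all add: Jeig_iff)
  show ?thesis by (simp add: Hbun_iff LS f j)
qed
lemma FbJ_bHbun: assumes "x \<in> Fplus F" "x \<in> bar (Jeig J)" shows "x \<in> bar (Hbun F J)"
proof -
  have f: "F (rp x) = rp x" "F (ip x) = ip x" using assms(1) by (simp_all add: Fplus_iff)
  have j0: "J (rp x) = ip x" "- J (ip x) = rp x" using assms(2) by (simp_all add: bar_iff Jeig_iff LS)
  then have j: "J (rp x) = ip x" "J (ip x) = - rp x" by (simp_all only: minus_equation_iff)
  show ?thesis by (simp add: bar_iff Hbun_iff LS f j)
qed
lemma FmbJ_Hbun: assumes "x \<in> Fminus F" "x \<in> bar (Jeig J)" shows "x \<in> Hbun F J"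
proof -
  have f: "F (rp x) = - rp x" "F (ip x) = - ip x" using assms(1) by (simp_all add: Fminus_iff)
  have j0: "J (rp x) = ip x" "- J (ip x) = rp x" using assms(2) by (simp_all add: bar_iff Jeig_iff LS)
  then have j: "J (rp x) = ip x" "J (ip x) = - rp x" by (simp_all only: minus_equation_iff)
  show ?thesis by (simp add: Hbun_iff LS f j)
qed
lemma FmJ_bHbun: assumes "x \<in> Fminus F" "x \<in> Jeig J" shows "x \<in> bar (Hbun F J)"
proof -
  have f: "F (rp x) = - rp x" "F (ip x) = - ip x" using assms(1) by (simp_all add: Fminus_iff)
  have j: "J (rp x) = - ip x" "J (ip x) = rp x" using assms(2) by (simp_all add: Jeig_iff)
  show ?thesis by (simp add: bar_iff Hbun_iff LS f j)
qed

lemma Hbun_diff: "x \<in> Hbun F J \<Longrightarrow> y \<in> Hbun F J \<Longrightarrow> x - y \<in> Hbun F J"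
  by (simp add: Hbun_iff LS)

definition pF where "pF w = mk ((1/2) *\<^sub>R (rp w + F (rp w))) ((1/2) *\<^sub>R (ip w + F (ip w)))"
definition mF where "mF w = mk ((1/2) *\<^sub>R (rp w - F (rp w))) ((1/2) *\<^sub>R (ip w - F (ip w)))"

lemma pF_Fplus: "pF w \<in> Fplus F" by (simp add: pF_def Fplus_iff LS algebra_simps)
lemma mF_Fminus: "mF w \<in> Fminus F" by (simp add: mF_def Fminus_iff LS algebra_simps)
lemma pF_Hbun: "w \<in> Hbun F J \<Longrightarrow> pF w \<in> Hbun F J" by (simp add: pF_def Hbun_iff LS algebra_simps)
lemma mF_Hbun: "w \<in> Hbun F J \<Longrightarrow> mF w \<in> Hbun F J" by (simp add: mF_def Hbun_iff LS algebra_simps)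
lemma pF_mF: "w = pF w + mF w" by (simp add: pF_def mF_def cgtan_eq_iff algebra_simps)

lemma tau_Hbun: "tau F J (cmb Z 0) \<in> Hbun F J"
  by (simp add: Hbun_iff rp_tau ip_tau fl_simps I1 I2)

end

lemma cmb_00: "cmb 0 0 = 0" by (simp add: cmb_def vec_eq_iff complex_eq_iff)
lemma cx_0: "linear \<iota> \<Longrightarrow> cx \<iota> 0 = 0" by (simp add: cx_def linear_0 cmb_00)
lemma pb_cov_0: "linear \<iota> \<Longrightarrow> pb_cov \<iota> 0 = 0" by (simp add: pb_cov_eq pbr_0 cmb_00)

lemma zero_in_pbT: "linear \<iota> \<Longrightarrow> 0 \<in> U \<Longrightarrow> 0 \<in> pbT \<iota> U"
  unfolding pbT_iff
  by (rule exI[of _ 0]) (simp add: cx_0 pb_cov_0 zero_prod_def)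


lemma cmb_add: "cmb a b + cmb c d = cmb (a + c) (b + d)" by (simp add: cmb_def vec_eq_iff complex_eq_iff)
lemma cx_add: "linear \<iota> \<Longrightarrow> cx \<iota> (X + Y) = cx \<iota> X + cx \<iota> Y" by (simp add: cx_def linear_add cmb_add)
lemma cx_diff: "linear \<iota> \<Longrightarrow> cx \<iota> (X - Y) = cx \<iota> X - cx \<iota> Y"
  by (simp add: cx_def linear_diff cmb_def vec_eq_iff complex_eq_iff)
lemma cx_cmb: "cx \<iota> (cmb A B) = cmb (\<iota> A) (\<iota> B)" by (simp add: cx_def)
lemma pb_cov_add: "linear \<iota> \<Longrightarrow> pb_cov \<iota> (a + b) = pb_cov \<iota> a + pb_cov \<iota> b"
  by (simp add: pb_cov_eq pbr_add cmb_add)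
lemma fst_tau: "fst (tau F J Y) = Y" by (simp add: tau_def)
lemma snd_mk: "snd (mk r s) = cmb (snd r) (snd s)" by (simp add: mk_def)

lemma ss_l: "x \<in> A \<Longrightarrow> 0 \<in> B \<Longrightarrow> x \<in> setsum2 A B"
  unfolding setsum2_def by (rule CollectI, rule exI[of _ x], rule exI[of _ 0]) simp
lemma ss_r: "0 \<in> A \<Longrightarrow> x \<in> B \<Longrightarrow> x \<in> setsum2 A B"
  unfolding setsum2_def by (rule CollectI, rule exI[of _ 0], rule exI[of _ x]) simp

locale revl = M: gp F J + N: gp FN JN
  for F J :: "'m::finite gtan \<Rightarrow> 'm gtan" and FN JN :: "'n::finite gtan \<Rightarrow> 'n gtan" +
  fixes \<iota> :: "real^'n \<Rightarrow> real^'m"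
  assumes lin_i: "linear \<iota>"
   and eF: "Fplus FN = setsum2 (pbT \<iota> (Hplus F J)) (pbT \<iota> (bar (Hplus F J)))"
   and eFm: "Fminus FN = setsum2 (pbT \<iota> (Hminus F J)) (pbT \<iota> (bar (Hminus F J)))"
   and eJ: "Jeig JN = setsum2 (pbT \<iota> (Hplus F J)) (pbT \<iota> (bar (Hminus F J)))"
begin

lemma z_Hp: "0 \<in> Hplus F J" by (simp add: M.Hplus_iff M.LS)
lemma z_Hm: "0 \<in> Hminus F J" by (simp add: M.Hminus_iff M.LS)
lemma cnjT_0: "cnjT 0 = 0" by (simp add: cgtan_eq_iff)
lemma z_bHp: "0 \<in> bar (Hplus F J)" by (simp add: bar_iff cnjT_0 z_Hp)
lemma z_bHm: "0 \<in> bar (Hminus F J)" by (simp add: bar_iff cnjT_0 z_Hm)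

abbreviation "Pp \<equiv> pbT \<iota> (Hplus F J)"
abbreviation "Pm \<equiv> pbT \<iota> (Hminus F J)"
abbreviation "Qp \<equiv> pbT \<iota> (bar (Hplus F J))"
abbreviation "Qm \<equiv> pbT \<iota> (bar (Hminus F J))"

lemma zPp: "0 \<in> Pp" by (rule zero_in_pbT[OF lin_i z_Hp])
lemma zPm: "0 \<in> Pm" by (rule zero_in_pbT[OF lin_i z_Hm])
lemma zQp: "0 \<in> Qp" by (rule zero_in_pbT[OF lin_i z_bHp])
lemma zQm: "0 \<in> Qm" by (rule zero_in_pbT[OF lin_i z_bHm])

lemma Pp_F: assumes "x \<in> Pp" shows "x \<in> Fplus FN" unfolding eF by (rule ss_l[OF assms zQp])
lemma Qp_F: assumes "x \<in> Qp" shows "x \<in> Fplus FN" unfolding eF by (rule ss_r[OF zPp assms])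
lemma Pm_F: assumes "x \<in> Pm" shows "x \<in> Fminus FN" unfolding eFm by (rule ss_l[OF assms zQm])
lemma Qm_F: assumes "x \<in> Qm" shows "x \<in> Fminus FN" unfolding eFm by (rule ss_r[OF zPm assms])
lemma Pp_J: assumes "x \<in> Pp" shows "x \<in> Jeig JN" unfolding eJ by (rule ss_l[OF assms zQm])
lemma Qm_J: assumes "x \<in> Qm" shows "x \<in> Jeig JN" unfolding eJ by (rule ss_r[OF zPp assms])
lemma Qp_bJ: "x \<in> Qp \<Longrightarrow> x \<in> bar (Jeig JN)"
  unfolding pbT_bar[OF lin_i] bar_iff using Pp_J by blast
lemma Pm_bJ: "x \<in> Pm \<Longrightarrow> x \<in> bar (Jeig JN)"
proof -
  assume "x \<in> Pm"
  then have "cnjT x \<in> Qm" unfolding pbT_bar[OF lin_i] bar_iff by simp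
  then show ?thesis unfolding bar_iff using Qm_J by blast
qed

lemma decomp: "\<exists>a b. a \<in> Pp \<and> b \<in> Pm \<and> tau FN JN (cmb Z 0) = a + b"
proof -
  define w where "w = tau FN JN (cmb Z 0)"
  have wH: "w \<in> Hbun FN JN" unfolding w_def by (rule N.tau_Hbun)
  obtain a c where a: "a \<in> Pp" and c: "c \<in> Qp" and pac: "N.pF w = a + c"
    using N.pF_Fplus[of w] unfolding eF setsum2_def by blast
  have "c = N.pF w - a" using pac by simp
  moreover have "a \<in> Hbun FN JN" by (rule N.FJ_Hbun[OF Pp_F[OF a] Pp_J[OF a]])
  ultimately have "c \<in> Hbun FN JN" using N.Hbun_diff N.pF_Hbun wH by simp
  moreover have "c \<in> bar (Hbun FN JN)" by (rule N.FbJ_bHbun[OF Qp_F[OF c] Qp_bJ[OF c]])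
  ultimately have "c = 0" by (rule N.Hbun_bar_zero)
  then have pa: "N.pF w = a" using pac by simp
  obtain b d where b: "b \<in> Pm" and d: "d \<in> Qm" and mbd: "N.mF w = b + d"
    using N.mF_Fminus[of w] unfolding eFm setsum2_def by blast
  have "d = N.mF w - b" using mbd by simp
  moreover have "b \<in> Hbun FN JN" by (rule N.FmbJ_Hbun[OF Pm_F[OF b] Pm_bJ[OF b]])
  ultimately have "d \<in> Hbun FN JN" using N.Hbun_diff N.mF_Hbun wH by simp
  moreover have "d \<in> bar (Hbun FN JN)" by (rule N.FmJ_bHbun[OF Qm_F[OF d] Qm_J[OF d]])
  ultimately have "d = 0" by (rule N.Hbun_bar_zero)
  then have mb: "N.mF w = b" using mbd by simp
  have "w = a + b" using N.pF_mF[of w] pa mb by simp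
  then show ?thesis using a b unfolding w_def by blast
qed

lemma key:
  "pfl FN JN Z = pbr \<iota> (pfl F J (\<iota> Z)) \<and> gfl FN JN Z = pbr \<iota> (gfl F J (\<iota> Z)) \<and>
   cx \<iota> (Fop FN JN (cmb Z 0)) = Fop F J (cx \<iota> (cmb Z 0))"
proof -
  obtain a b where a: "a \<in> Pp" and b: "b \<in> Pm" and w: "tau FN JN (cmb Z 0) = a + b"
    using decomp by blast
  obtain \<eta>a where ha: "(cx \<iota> (fst a), \<eta>a) \<in> Hplus F J" "snd a = pb_cov \<iota> \<eta>a"
    using a unfolding pbT_iff by blast
  obtain \<eta>b where hb: "(cx \<iota> (fst b), \<eta>b) \<in> Hminus F J" "snd b = pb_cov \<iota> \<eta>b"
    using b unfolding pbT_iff by blast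
  have ga: "(cx \<iota> (fst a), \<eta>a) = tau F J (cx \<iota> (fst a))"
    using M.graph_cx[of "(cx \<iota> (fst a), \<eta>a)"] ha(1) by (simp add: Hplus_def)
  have gb: "(cx \<iota> (fst b), \<eta>b) = tau F J (cx \<iota> (fst b))"
    using M.graph_cx[of "(cx \<iota> (fst b), \<eta>b)"] hb(1) by (simp add: Hminus_def)
  have f: "cmb Z 0 = fst a + fst b" using arg_cong[OF w, of fst] by (simp add: fst_tau)
  have cxf: "cx \<iota> (cmb Z 0) = cx \<iota> (fst a) + cx \<iota> (fst b)" using f by (simp add: cx_add lin_i)
  have "\<eta>a + \<eta>b = snd (tau F J (cx \<iota> (fst a))) + snd (tau F J (cx \<iota> (fst b)))"
    using ga gb by (metis snd_conv)
  also have "\<dots> = snd (tau F J (cx \<iota> (cmb Z 0)))" by (simp add: cxf M.tau_add)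
  finally have etab: "\<eta>a + \<eta>b = snd (tau F J (cmb (\<iota> Z) 0))" by (simp add: cx_cmb linear_0[OF lin_i])
  have "snd (tau FN JN (cmb Z 0)) = pb_cov \<iota> (\<eta>a + \<eta>b)"
    using arg_cong[OF w, of snd] ha(2) hb(2) by (simp add: pb_cov_add lin_i)
  then have "cmb (pfl FN JN Z) (gfl FN JN Z) = cmb (pbr \<iota> (pfl F J (\<iota> Z))) (pbr \<iota> (gfl F J (\<iota> Z)))"
    unfolding etab by (simp add: M.tau_mk N.tau_mk snd_mk M.fl_simps N.fl_simps pb_cov_eq lin_i)
  then have k1: "pfl FN JN Z = pbr \<iota> (pfl F J (\<iota> Z)) \<and> gfl FN JN Z = pbr \<iota> (gfl F J (\<iota> Z))"
    by (simp add: cmb_eq_iff)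
  have aF: "cxT FN a = a" using Pp_F[OF a] by (simp add: Fplus_def)
  have bF: "cxT FN b = - b" using Pm_F[OF b] by (simp add: Fminus_def)
  have "Fop FN JN (cmb Z 0) = fst (cxT FN (a + b))" by (simp add: Fop_def w)
  also have "\<dots> = fst a - fst b" by (simp add: cxT_add N.linF aF bF)
  finally have FN1: "Fop FN JN (cmb Z 0) = fst a - fst b" .
  have aM: "cxT F (cx \<iota> (fst a), \<eta>a) = (cx \<iota> (fst a), \<eta>a)" using ha(1) by (simp add: Hplus_def Fplus_def)
  have bM: "cxT F (cx \<iota> (fst b), \<eta>b) = - (cx \<iota> (fst b), \<eta>b)" using hb(1) by (simp add: Hminus_def Fminus_def)
  have "Fop F J (cx \<iota> (cmb Z 0)) = Fop F J (cx \<iota> (fst a)) + Fop F J (cx \<iota> (fst b))"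
    by (simp add: cxf M.Fop_add)
  also have "\<dots> = cx \<iota> (fst a) - cx \<iota> (fst b)"
    unfolding Fop_def using aM bM ga gb by (simp add: fst_tau)
  finally have "Fop F J (cx \<iota> (cmb Z 0)) = cx \<iota> (Fop FN JN (cmb Z 0))"
    by (simp add: FN1 cx_diff lin_i)
  then show ?thesis using k1 by simp
qed

lemma R2: "metric FN JN = pb_form \<iota> (metric F J)"
proof (intro ext)
  fix X Y
  show "metric FN JN X Y = pb_form \<iota> (metric F J) X Y"
    using key[of X] by (simp add: N.metric_eq2 M.metric_eq2 pb_form_def pbr_inner lin_i)
qed

lemma R3: "psi FN JN = pb_form \<iota> (psi F J)"
proof (intro ext)
  fix X Y
  show "psi FN JN X Y = pb_form \<iota> (psi F J) X Y"
    using key[of X] by (simp add: N.psi_eq2 M.psi_eq2 pb_form_def pbr_inner lin_i)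
qed

lemma R4: "cx \<iota> (Fop FN JN X) = Fop F J (cx \<iota> X)"
proof -
  define Z1 where "Z1 = reV X"
  define Z2 where "Z2 = imV X"
  have X: "X = cmb Z1 Z2" by (simp add: Z1_def Z2_def)
  have k: "Fop F J (cmb (\<iota> Z) 0) = cmb (\<iota> (reV (Fop FN JN (cmb Z 0)))) (\<iota> (imV (Fop FN JN (cmb Z 0))))" for Z
    using key[of Z] by (simp add: cx_def linear_0[OF lin_i])
  show ?thesis unfolding X
    apply (subst N.Fop_split)
    apply (simp only: cx_cmb)
    apply (subst M.Fop_split)
    apply (simp add: k lin_i linear_diff linear_add)
    done
qed

lemma R1: "regular_invariant F J \<iota>"
  unfolding regular_invariant_def
proof (intro conjI allI impI)
  fix X assume h: "\<forall>Y. pb_form \<iota> (metric F J) X Y = 0"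
  then have "gfl FN JN X \<bullet> Y = 0" for Y using R2 by (simp add: N.metric_eq2[symmetric])
  then have "gfl FN JN X = 0" by (metis inner_eq_zero_iff)
  then have "N.sh (gfl FN JN X) = N.sh 0" by simp
  then show "X = 0" using N.lin_sh by (simp add: linear_0)
next
  fix X show "\<exists>Y. Fop F J (cx \<iota> X) = cx \<iota> Y" using R4[of X] by metis
qed

end


theorem proposition4p1:
  fixes F J :: "'m::finite gtan \<Rightarrow> 'm gtan"
    and \<iota> :: "real^'n::finite \<Rightarrow> real^'m"
  assumes "gaph F J"
    and "linear \<iota>" and "inj \<iota>"
  shows "(regular_invariant F J \<iota> \<longleftrightarrow>
           (direct_sum4 (pbT \<iota> (Hplus F J)) (pbT \<iota> (Hminus F J))
                        (pbT \<iota> (bar (Hplus F J))) (pbT \<iota> (bar (Hminus F J))) \<and>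
            (\<exists>FN JN :: 'n gtan \<Rightarrow> 'n gtan. gaph FN JN \<and>
               Fplus FN = setsum2 (pbT \<iota> (Hplus F J)) (pbT \<iota> (bar (Hplus F J))) \<and>
               Fminus FN = setsum2 (pbT \<iota> (Hminus F J)) (pbT \<iota> (bar (Hminus F J))) \<and>
               Jeig JN = setsum2 (pbT \<iota> (Hplus F J)) (pbT \<iota> (bar (Hminus F J)))))) \<and>
         (\<forall>FN JN :: 'n gtan \<Rightarrow> 'n gtan.
           regular_invariant F J \<iota> \<and> gaph FN JN \<and>
           Fplus FN = setsum2 (pbT \<iota> (Hplus F J)) (pbT \<iota> (bar (Hplus F J))) \<and>
           Fminus FN = setsum2 (pbT \<iota> (Hminus F J)) (pbT \<iota> (bar (Hminus F J))) \<and>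
           Jeig JN = setsum2 (pbT \<iota> (Hplus F J)) (pbT \<iota> (bar (Hminus F J))) \<longrightarrow>
           metric FN JN = pb_form \<iota> (metric F J) \<and>
           psi FN JN = pb_form \<iota> (psi F J) \<and>
           (\<forall>X. cx \<iota> (Fop FN JN X) = Fop F J (cx \<iota> X)))"
proof -
  obtain gl where gl: "linear gl" "gl \<circ> \<iota> = id"
    using linear_injective_left_inverse[OF assms(2,3)] by blast
  have gli: "gl (\<iota> x) = x" for x using gl(2) by (metis comp_apply id_apply)
  have fwd: "direct_sum4 (pbT \<iota> (Hplus F J)) (pbT \<iota> (Hminus F J))
                        (pbT \<iota> (bar (Hplus F J))) (pbT \<iota> (bar (Hminus F J))) \<and>
            (\<exists>FN JN :: 'n gtan \<Rightarrow> 'n gtan. gaph FN JN \<and>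
               Fplus FN = setsum2 (pbT \<iota> (Hplus F J)) (pbT \<iota> (bar (Hplus F J))) \<and>
               Fminus FN = setsum2 (pbT \<iota> (Hminus F J)) (pbT \<iota> (bar (Hminus F J))) \<and>
               Jeig JN = setsum2 (pbT \<iota> (Hplus F J)) (pbT \<iota> (bar (Hminus F J))))"
    if RI: "regular_invariant F J \<iota>"
  proof -
    interpret S: subri F J \<iota> gl
      by (intro subri.intro subm.intro gp.intro subm_axioms.intro subri_axioms.intro) (simp_all add: assms gl(1) gli RI)
    show ?thesis by (rule S.forward)
  qed
  have rev: "regular_invariant F J \<iota> \<and> metric FN JN = pb_form \<iota> (metric F J) \<and>
           psi FN JN = pb_form \<iota> (psi F J) \<and>
           (\<forall>X. cx \<iota> (Fop FN JN X) = Fop F J (cx \<iota> X))"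
    if h: "gaph FN JN"
      "Fplus FN = setsum2 (pbT \<iota> (Hplus F J)) (pbT \<iota> (bar (Hplus F J)))"
      "Fminus FN = setsum2 (pbT \<iota> (Hminus F J)) (pbT \<iota> (bar (Hminus F J)))"
      "Jeig JN = setsum2 (pbT \<iota> (Hplus F J)) (pbT \<iota> (bar (Hminus F J)))"
    for FN JN :: "'n gtan \<Rightarrow> 'n gtan"
  proof -
    interpret R: revl F J FN JN \<iota>
      by (intro revl.intro gp.intro revl_axioms.intro) (simp_all add: assms h)
    show ?thesis using R.R1 R.R2 R.R3 R.R4 by blast
  qed
  show ?thesis
  proof (rule conjI)
    show "regular_invariant F J \<iota> = (direct_sum4 (pbT \<iota> (Hplus F J)) (pbT \<iota> (Hminus F J))
                        (pbT \<iota> (bar (Hplus F J))) (pbT \<iota> (bar (Hminus F J))) \<and>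
            (\<exists>FN JN :: 'n gtan \<Rightarrow> 'n gtan. gaph FN JN \<and>
               Fplus FN = setsum2 (pbT \<iota> (Hplus F J)) (pbT \<iota> (bar (Hplus F J))) \<and>
               Fminus FN = setsum2 (pbT \<iota> (Hminus F J)) (pbT \<iota> (bar (Hminus F J))) \<and>
               Jeig JN = setsum2 (pbT \<iota> (Hplus F J)) (pbT \<iota> (bar (Hminus F J)))))"
      using fwd rev by blast
    show "\<forall>FN JN :: 'n gtan \<Rightarrow> 'n gtan.
           regular_invariant F J \<iota> \<and> gaph FN JN \<and>
           Fplus FN = setsum2 (pbT \<iota> (Hplus F J)) (pbT \<iota> (bar (Hplus F J))) \<and>
           Fminus FN = setsum2 (pbT \<iota> (Hminus F J)) (pbT \<iota> (bar (Hminus F J))) \<and>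
           Jeig JN = setsum2 (pbT \<iota> (Hplus F J)) (pbT \<iota> (bar (Hminus F J))) \<longrightarrow>
           metric FN JN = pb_form \<iota> (metric F J) \<and>
           psi FN JN = pb_form \<iota> (psi F J) \<and>
           (\<forall>X. cx \<iota> (Fop FN JN X) = Fop F J (cx \<iota> X))"
      using rev by blast
  qed
qed


end
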